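(* Let $T\in\mathbb{T}$ have a positive weight on each edge, with adjacency matrix $A$. Then the smallest positive eigenvalue $\tau(T)$ of $A$ is simple, and there exists an eigenvector of $A$ corresponding to $\tau(T)$ all of whose entries are nonzero.
   Context: $\mathbb{T}$ is the class of simple undirected weighted trees $T$ such that (i) $T$ has at least one non-pendant vertex, and (ii) every non-pendant vertex of $T$ is adjacent to at least one pendant vertex (a vertex of degree one). The adjacency matrix $A$ has $(i,j)$ entry equal to the weight of edge $v_iv_j$, or $0$ if no edge. *)

theory Defs
  imports "Jordan_Normal_Form.Char_Poly"
begin

definition simple_graph :: "nat \<Rightarrow> (nat \<Rightarrow> nat \<Rightarrow> bool) \<Rightarrow> bool" where
  "simple_graph n E \<longleftrightarrow> (\<forall>i j. E i j \<longrightarrow> i < n \<and> j < n) \<and>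
     (\<forall>i j. E i j \<longleftrightarrow> E j i) \<and> (\<forall>i. \<not> E i i)"

definition graph_connected :: "nat \<Rightarrow> (nat \<Rightarrow> nat \<Rightarrow> bool) \<Rightarrow> bool" where
  "graph_connected n E \<longleftrightarrow> (\<forall>i<n. \<forall>j<n. E\<^sup>*\<^sup>* i j)"

definition is_cycle :: "(nat \<Rightarrow> nat \<Rightarrow> bool) \<Rightarrow> nat list \<Rightarrow> bool" where
  "is_cycle E vs \<longleftrightarrow> length vs \<ge> 3 \<and> distinct vs \<and>
     (\<forall>k. Suc k < length vs \<longrightarrow> E (vs ! k) (vs ! Suc k)) \<and> E (last vs) (hd vs)"

definition is_tree :: "nat \<Rightarrow> (nat \<Rightarrow> nat \<Rightarrow> bool) \<Rightarrow> bool" where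
  "is_tree n E \<longleftrightarrow> n \<ge> 1 \<and> simple_graph n E \<and> graph_connected n E \<and> (\<nexists>vs. is_cycle E vs)"

definition degree :: "nat \<Rightarrow> (nat \<Rightarrow> nat \<Rightarrow> bool) \<Rightarrow> nat \<Rightarrow> nat" where
  "degree n E i = card {j. j < n \<and> E i j}"

definition pendant :: "nat \<Rightarrow> (nat \<Rightarrow> nat \<Rightarrow> bool) \<Rightarrow> nat \<Rightarrow> bool" where
  "pendant n E i \<longleftrightarrow> degree n E i = 1"

definition class_T :: "nat \<Rightarrow> (nat \<Rightarrow> nat \<Rightarrow> bool) \<Rightarrow> bool" where
  "class_T n E \<longleftrightarrow> is_tree n E \<and> (\<exists>i<n. \<not> pendant n E i) \<and>
     (\<forall>i<n. \<not> pendant n E i \<longrightarrow> (\<exists>j<n. E i j \<and> pendant n E j))"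

definition adj_matrix :: "nat \<Rightarrow> (nat \<Rightarrow> nat \<Rightarrow> bool) \<Rightarrow> (nat \<Rightarrow> nat \<Rightarrow> real) \<Rightarrow> real mat" where
  "adj_matrix n E w = mat n n (\<lambda>(i, j). if E i j then w i j else 0)"

end

theory Submission
  imports Defs Jordan_Normal_Form.Jordan_Normal_Form_Uniqueness Jordan_Normal_Form.Jordan_Normal_Form_Existence
begin

hide_const (open) Coset.order

definition sym_mat :: "nat \<Rightarrow> 'a mat \<Rightarrow> bool" where
  "sym_mat n A \<longleftrightarrow> A \<in> carrier_mat n n \<and> (\<forall>i<n. \<forall>j<n. A $$ (i,j) = A $$ (j,i))"

lemma mult_mat_vec_sum: "A \<in> carrier_mat n m \<Longrightarrow> v \<in> carrier_vec m \<Longrightarrow> i < n \<Longrightarrow>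
  (A *\<^sub>v v) $ i = (\<Sum>j<m. A $$ (i,j) * v $ j)"
  by (auto simp: scalar_prod_def atLeast0LessThan intro!: sum.cong)

lemma sym_real_eigenvalue_real:
  fixes A :: "real mat"
  assumes S: "sym_mat n A"
    and ev: "eigenvalue (map_mat complex_of_real A) a"
  shows "Im a = 0"
proof -
  have A: "A \<in> carrier_mat n n" using S by (simp add: sym_mat_def)
  have sym: "\<And>i j. i < n \<Longrightarrow> j < n \<Longrightarrow> A $$ (i,j) = A $$ (j,i)" using S by (simp add: sym_mat_def)
  let ?Ac = "map_mat complex_of_real A"
  have Ac: "?Ac \<in> carrier_mat n n" using A by simp
  from ev obtain u where u: "eigenvector ?Ac u a" unfolding eigenvalue_def by auto
  hence uc: "u \<in> carrier_vec n" and un: "u \<noteq> 0\<^sub>v n" and eq: "?Ac *\<^sub>v u = a \<cdot>\<^sub>v u"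
    using Ac unfolding eigenvector_def by auto
  have rows: "(\<Sum>j<n. complex_of_real (A $$ (i,j)) * u $ j) = a * u $ i" if "i < n" for i
  proof -
    have "(?Ac *\<^sub>v u) $ i = (a \<cdot>\<^sub>v u) $ i" using eq by simp
    thus ?thesis using mult_mat_vec_sum[OF Ac uc that] that A uc by simp
  qed
  define s where "s = (\<Sum>i<n. cnj (u $ i) * (\<Sum>j<n. complex_of_real (A $$ (i,j)) * u $ j))"
  define N where "N = (\<Sum>i<n. cnj (u $ i) * u $ i)"
  have s1: "s = a * N" unfolding s_def N_def
    by (auto simp: rows sum_distrib_left intro!: sum.cong)
  have "cnj s = (\<Sum>i<n. u $ i * (\<Sum>j<n. complex_of_real (A $$ (i,j)) * cnj (u $ j)))"
    unfolding s_def by (simp add: sum_distrib_left)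
  also have "\<dots> = (\<Sum>i<n. \<Sum>j<n. cnj (u $ j) * complex_of_real (A $$ (j,i)) * u $ i)"
    by (auto simp: sum_distrib_left sym intro!: sum.cong)
  also have "\<dots> = (\<Sum>j<n. \<Sum>i<n. cnj (u $ j) * complex_of_real (A $$ (j,i)) * u $ i)"
    by (rule sum.swap)
  also have "\<dots> = s" by (simp only: s_def sum_distrib_left mult.assoc)
  finally have s2: "cnj s = s" .
  have Nreal: "N = complex_of_real (\<Sum>i<n. (cmod (u $ i))^2)"
    unfolding N_def of_real_sum
  proof (intro sum.cong refl)
    fix i show "cnj (u $ i) * u $ i = complex_of_real ((cmod (u $ i))\<^sup>2)"
      by (subst complex_norm_square) (rule mult.commute)
  qed
  have "\<exists>k<n. u $ k \<noteq> 0"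
  proof (rule ccontr)
    assume "\<not> (\<exists>k<n. u $ k \<noteq> 0)"
    hence "u = 0\<^sub>v n" using uc by (intro eq_vecI) auto
    with un show False by simp
  qed
  then obtain k where k: "k < n" "u $ k \<noteq> 0" by blast
  have "(\<Sum>i<n. (cmod (u $ i))^2) \<ge> (cmod (u $ k))^2"
    by (rule member_le_sum, use k in auto)
  moreover have "(cmod (u $ k))^2 > 0" using k by simp
  ultimately have Npos: "(\<Sum>i<n. (cmod (u $ i))^2) > 0" by linarith
  have cN: "cnj N = N" unfolding Nreal by (rule complex_cnj_complex_of_real)
  have "cnj a * N = cnj s" using s1 cN by simp
  also have "\<dots> = a * N" using s2 s1 by simp
  finally have eqN: "cnj a * N = a * N" .
  have "N \<noteq> 0" unfolding Nreal using Npos by (simp only: of_real_eq_0_iff)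
  hence "cnj a = a" using eqN by simp
  thus ?thesis by (metis Reals_cnj_iff complex_is_Real_iff)
qed

lemma sym_real_split:
  fixes A :: "real mat"
  assumes S: "sym_mat n A"
  shows "\<exists>es. char_poly A = (\<Prod>a\<leftarrow>es. [:-a,1:])"
proof -
  have A: "A \<in> carrier_mat n n" using S by (simp add: sym_mat_def)
  let ?Ac = "map_mat complex_of_real A"
  have Ac: "?Ac \<in> carrier_mat n n" using A by simp
  have cp: "char_poly ?Ac = map_poly complex_of_real (char_poly A)"
    by (rule of_real_hom.char_poly_hom[OF A])
  obtain as where as: "char_poly ?Ac = (\<Prod>a\<leftarrow>as. [:-a,1:])"
    using char_poly_factorized[OF Ac] by auto
  have re: "Im a = 0" if "a \<in> set as" for a
  proof -
    have "poly (char_poly ?Ac) a = 0" unfolding as using that by (rule linear_poly_root)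
    hence "eigenvalue ?Ac a" using eigenvalue_root_char_poly[OF Ac] by simp
    thus ?thesis by (rule sym_real_eigenvalue_real[OF S])
  qed
  interpret mp: map_poly_comm_ring_hom complex_of_real ..
  have "map_poly complex_of_real (\<Prod>a\<leftarrow>map Re as. [:-a,1:]) = (\<Prod>a\<leftarrow>as. [:-a,1:])"
    using re
  proof (induct as)
    case (Cons a as)
    have "complex_of_real (Re a) = a" using Cons(2) by (simp add: complex_eq_iff)
    hence h: "map_poly complex_of_real [:-Re a,1:] = [:-a,1:]" by simp
    have "map_poly complex_of_real (\<Prod>a\<leftarrow>map Re (a # as). [:-a,1:]) =
       map_poly complex_of_real [:-Re a,1:] * map_poly complex_of_real (\<Prod>a\<leftarrow>map Re as. [:-a,1:])"
      by (simp only: list.map prod_list.Cons mp.hom_mult)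
    then show ?case using Cons h by simp
  qed simp
  hence "map_poly complex_of_real (char_poly A) = map_poly complex_of_real (\<Prod>a\<leftarrow>map Re as. [:-a,1:])"
    using cp as by simp
  hence "char_poly A = (\<Prod>a\<leftarrow>map Re as. [:-a,1:])" (is "?l = ?r")
  proof (intro poly_eqI)
    fix i
    assume "map_poly complex_of_real ?l = map_poly complex_of_real ?r"
    from arg_cong[OF this, of "\<lambda>p. coeff p i"] show "coeff ?l i = coeff ?r i"
      by (simp add: coeff_map_poly)
  qed
  thus ?thesis by blast
qed


lemma sym_char_matrix: "sym_mat n A \<Longrightarrow> sym_mat n (char_matrix A e)"
  unfolding sym_mat_def char_matrix_def by auto

lemma pow_mat_1: "M \<in> carrier_mat n n \<Longrightarrow> M ^\<^sub>m 1 = M"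
  by simp

lemma pow_mat_2: "M \<in> carrier_mat n n \<Longrightarrow> M ^\<^sub>m 2 = M * M"
  by (simp add: numeral_2_eq_2)

lemma sym_quad_zero:
  fixes M :: "real mat"
  assumes S: "sym_mat n M" and v: "v \<in> carrier_vec n" and z: "M *\<^sub>v (M *\<^sub>v v) = 0\<^sub>v n"
  shows "M *\<^sub>v v = 0\<^sub>v n"
proof -
  have M: "M \<in> carrier_mat n n" using S by (simp add: sym_mat_def)
  have sym: "\<And>i j. i < n \<Longrightarrow> j < n \<Longrightarrow> M $$ (i,j) = M $$ (j,i)" using S by (simp add: sym_mat_def)
  define y where "y = M *\<^sub>v v"
  have y: "y \<in> carrier_vec n" unfolding y_def using M v by simp
  have yi: "y $ i = (\<Sum>j<n. M $$ (i,j) * v $ j)" if "i < n" for i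
    unfolding y_def by (rule mult_mat_vec_sum[OF M v that])
  have zi: "(\<Sum>j<n. M $$ (i,j) * y $ j) = 0" if "i < n" for i
  proof -
    have "(M *\<^sub>v y) $ i = 0" using z that unfolding y_def by simp
    thus ?thesis using mult_mat_vec_sum[OF M y that] by simp
  qed
  have "(\<Sum>i<n. y $ i * y $ i) = (\<Sum>i<n. (\<Sum>j<n. M $$ (i,j) * v $ j) * y $ i)"
    by (intro sum.cong refl) (simp add: yi)
  also have "\<dots> = (\<Sum>i<n. \<Sum>j<n. v $ j * (M $$ (j,i) * y $ i))"
  proof (intro sum.cong refl)
    fix i assume i: "i \<in> {..<n}"
    show "(\<Sum>j<n. M $$ (i,j) * v $ j) * y $ i = (\<Sum>j<n. v $ j * (M $$ (j,i) * y $ i))"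
      unfolding sum_distrib_right
    proof (intro sum.cong refl)
      fix j assume j: "j \<in> {..<n}"
      have "M $$ (j,i) = M $$ (i,j)" using sym i j by auto
      thus "M $$ (i,j) * v $ j * y $ i = v $ j * (M $$ (j,i) * y $ i)" by simp
    qed
  qed
  also have "\<dots> = (\<Sum>j<n. \<Sum>i<n. v $ j * (M $$ (j,i) * y $ i))" by (rule sum.swap)
  also have "\<dots> = (\<Sum>j<n. v $ j * (\<Sum>i<n. M $$ (j,i) * y $ i))" by (simp add: sum_distrib_left)
  also have "\<dots> = 0" by (simp add: zi)
  finally have ss: "(\<Sum>i<n. y $ i * y $ i) = 0" .
  have "\<forall>i\<in>{..<n}. y $ i * y $ i = 0"
    using ss by (subst (asm) sum_nonneg_eq_0_iff) auto
  hence "y = 0\<^sub>v n" using y by (intro eq_vecI) auto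
  thus ?thesis unfolding y_def .
qed

lemma sym_kernel_sq:
  fixes M :: "real mat"
  assumes S: "sym_mat n M"
  shows "mat_kernel (M ^\<^sub>m 2) = mat_kernel (M ^\<^sub>m 1)"
proof -
  have M: "M \<in> carrier_mat n n" using S by (simp add: sym_mat_def)
  have MM: "M * M \<in> carrier_mat n n" using M by simp
  show ?thesis unfolding pow_mat_2[OF M] pow_mat_1[OF M] mat_kernel[OF M] mat_kernel[OF MM]
  proof (intro Collect_cong iffI conjI; elim conjE)
    fix v :: "real vec" assume v: "v \<in> carrier_vec n" and z: "M * M *\<^sub>v v = 0\<^sub>v n"
    show "M *\<^sub>v v = 0\<^sub>v n"
      by (rule sym_quad_zero[OF S v]) (use z assoc_mult_mat_vec[OF M M v] in simp)
  next
    fix v :: "real vec" assume v: "v \<in> carrier_vec n" and z: "M *\<^sub>v v = 0\<^sub>v n"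
    have "M *\<^sub>v 0\<^sub>v n = 0\<^sub>v n"
      by (intro eq_vecI) (use M in \<open>auto simp: mult_mat_vec_sum[OF M]\<close>)
    thus "M * M *\<^sub>v v = 0\<^sub>v n" using assoc_mult_mat_vec[OF M M v] z M by simp
  qed auto
qed

lemma dim_gen_eigenspace_sym_eq:
  fixes A :: "real mat"
  assumes S: "sym_mat n A"
  shows "dim_gen_eigenspace A e 2 = dim_gen_eigenspace A e 1"
  unfolding dim_gen_eigenspace_def kernel_dim_def
  using sym_kernel_sq[OF sym_char_matrix[OF S, of e]] by simp

lemma sum_list_eq_le:
  assumes "sum_list (map f xs) = sum_list (map g xs)" "\<And>x. x \<in> set xs \<Longrightarrow> (f x :: nat) \<le> g x"
  shows "\<And>x. x \<in> set xs \<Longrightarrow> f x = g x"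
  using assms
proof (induct xs)
  case (Cons a xs)
  have "f a \<le> g a" using Cons by simp
  moreover have "sum_list (map f xs) \<le> sum_list (map g xs)"
    using Cons(4) by (intro sum_list_mono) auto
  ultimately have "f a = g a" "sum_list (map f xs) = sum_list (map g xs)" using Cons(3) by auto
  thus ?case using Cons by auto
qed simp

lemma sym_jordan_blocks:
  fixes A :: "real mat"
  assumes S: "sym_mat n A" and J: "jordan_nf A n_as"
  shows "\<And>d e. (d,e) \<in> set n_as \<Longrightarrow> d = 1"
proof -
  fix d e assume de: "(d,e) \<in> set n_as"
  have d0: "d \<noteq> 0" using J de unfolding jordan_nf_def by force
  have "dim_gen_eigenspace A e 2 = dim_gen_eigenspace A e 1" by (rule dim_gen_eigenspace_sym_eq[OF S])
  hence eq: "(\<Sum> n \<leftarrow> map fst [(n, e')\<leftarrow>n_as . e' = e]. min 1 n) = (\<Sum> n \<leftarrow> map fst [(n, e')\<leftarrow>n_as . e' = e]. min 2 n)"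
    unfolding dim_gen_eigenspace[OF J] by simp
  have "d \<in> set (map fst [(n, e')\<leftarrow>n_as . e' = e])" using de by force
  from sum_list_eq_le[of "\<lambda>n. min 1 n" _ "\<lambda>n. min 2 n", OF _ _ this] eq
  have "min 1 d = min 2 d" by (simp add: map_map o_def) 
  thus "d = 1" using d0 by simp
qed


lemma bilin_sum:
  fixes P :: "nat \<Rightarrow> nat \<Rightarrow> real"
  shows "(\<Sum>k<n. (\<Sum>i<n. P k i * a i) * (\<Sum>j<n. P k j * b j)) =
    (\<Sum>i<n. \<Sum>j<n. a i * b j * (\<Sum>k<n. P k i * P k j))"
proof -
  have "(\<Sum>k<n. (\<Sum>i<n. P k i * a i) * (\<Sum>j<n. P k j * b j)) =
     (\<Sum>k<n. \<Sum>i<n. \<Sum>j<n. a i * b j * (P k i * P k j))"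
    unfolding sum_product by (intro sum.cong refl) (simp add: mult_ac)
  also have "\<dots> = (\<Sum>i<n. \<Sum>k<n. \<Sum>j<n. a i * b j * (P k i * P k j))" by (rule sum.swap)
  also have "\<dots> = (\<Sum>i<n. \<Sum>j<n. \<Sum>k<n. a i * b j * (P k i * P k j))"
    by (rule sum.cong[OF refl], rule sum.swap)
  also have "\<dots> = (\<Sum>i<n. \<Sum>j<n. a i * b j * (\<Sum>k<n. P k i * P k j))"
    by (simp add: sum_distrib_left)
  finally show ?thesis .
qed

lemma psd_sum:
  fixes X P :: "nat \<Rightarrow> nat \<Rightarrow> real" and g c :: "nat \<Rightarrow> real"
  assumes symX: "\<And>k l. k < n \<Longrightarrow> l < n \<Longrightarrow> X k l = X l k"
    and XP: "\<And>k j. k < n \<Longrightarrow> j < n \<Longrightarrow> (\<Sum>l<n. X k l * P l j) = P k j * g j"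
    and g: "\<And>j. j < n \<Longrightarrow> g j \<ge> 0"
  shows "(\<Sum>k<n. (\<Sum>i<n. P k i * c i) * (\<Sum>l<n. X k l * (\<Sum>j<n. P l j * c j))) \<ge> 0"
proof -
  define G where "G i j = (\<Sum>k<n. P k i * P k j)" for i j
  have Gsym: "G i j * g j = g i * G i j" if i: "i < n" and j: "j < n" for i j
  proof -
    have "G i j * g j = (\<Sum>k<n. P k i * (P k j * g j))" unfolding G_def
      by (simp add: sum_distrib_right mult.assoc)
    also have "\<dots> = (\<Sum>k<n. P k i * (\<Sum>l<n. X k l * P l j))" using XP j by simp
    also have "\<dots> = (\<Sum>k<n. \<Sum>l<n. P l j * (X l k * P k i))"
      by (auto simp: sum_distrib_left symX mult_ac intro!: sum.cong)
    also have "\<dots> = (\<Sum>l<n. \<Sum>k<n. P l j * (X l k * P k i))" by (rule sum.swap)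
    also have "\<dots> = (\<Sum>l<n. P l j * (\<Sum>k<n. X l k * P k i))" by (simp add: sum_distrib_left)
    also have "\<dots> = (\<Sum>l<n. P l j * (P l i * g i))" using XP i by simp
    also have "\<dots> = g i * G i j" unfolding G_def by (simp add: sum_distrib_left mult_ac)
    finally show ?thesis .
  qed
  have inner: "(\<Sum>l<n. X k l * (\<Sum>j<n. P l j * c j)) = (\<Sum>j<n. P k j * (g j * c j))" if k: "k < n" for k
  proof -
    have "(\<Sum>l<n. X k l * (\<Sum>j<n. P l j * c j)) = (\<Sum>l<n. \<Sum>j<n. X k l * P l j * c j)"
      by (simp add: sum_distrib_left mult_ac)
    also have "\<dots> = (\<Sum>j<n. \<Sum>l<n. X k l * P l j * c j)" by (rule sum.swap)
    also have "\<dots> = (\<Sum>j<n. (\<Sum>l<n. X k l * P l j) * c j)" by (simp add: sum_distrib_right)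
    also have "\<dots> = (\<Sum>j<n. P k j * (g j * c j))" using XP k by (simp add: mult_ac)
    finally show ?thesis .
  qed
  define r where "r i = sqrt (g i) * c i" for i
  have "(\<Sum>k<n. (\<Sum>i<n. P k i * c i) * (\<Sum>l<n. X k l * (\<Sum>j<n. P l j * c j))) =
      (\<Sum>k<n. (\<Sum>i<n. P k i * c i) * (\<Sum>j<n. P k j * (g j * c j)))"
    by (intro sum.cong refl) (simp add: inner)
  also have "\<dots> = (\<Sum>i<n. \<Sum>j<n. c i * (g j * c j) * G i j)"
    unfolding bilin_sum G_def ..
  also have "\<dots> = (\<Sum>i<n. \<Sum>j<n. r i * r j * G i j)"
  proof (intro sum.cong refl)
    fix i j assume i: "i \<in> {..<n}" and j: "j \<in> {..<n}"
    have gi: "g i \<ge> 0" and gj: "g j \<ge> 0" using g i j by auto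
    show "c i * (g j * c j) * G i j = r i * r j * G i j"
    proof (cases "G i j = 0")
      case False
      with Gsym[of i j] i j have "g i = g j" by simp
      thus ?thesis unfolding r_def using gj by (simp add: mult_ac real_sqrt_mult[symmetric])
    qed simp
  qed
  also have "\<dots> = (\<Sum>k<n. (\<Sum>i<n. P k i * r i) * (\<Sum>j<n. P k j * r j))"
    unfolding bilin_sum G_def ..
  also have "\<dots> \<ge> 0" by (intro sum_nonneg) simp
  finally show ?thesis .
qed

definition diag_mat_of :: "nat \<Rightarrow> (nat \<Rightarrow> 'a::zero) \<Rightarrow> 'a mat" where
  "diag_mat_of n g = mat n n (\<lambda>(i,j). if i = j then g i else 0)"

lemma diag_mat_of_carrier[simp]: "diag_mat_of n g \<in> carrier_mat n n"
  by (simp add: diag_mat_of_def)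

lemma mat_mult_entry_sum: "A \<in> carrier_mat n m \<Longrightarrow> B \<in> carrier_mat m k \<Longrightarrow> i < n \<Longrightarrow> j < k \<Longrightarrow>
  (A * B) $$ (i,j) = (\<Sum>l<m. A $$ (i,l) * B $$ (l,j))"
  by (auto simp: scalar_prod_def atLeast0LessThan intro!: sum.cong)

lemma mult_diag_entry: "P \<in> carrier_mat n n \<Longrightarrow> i < n \<Longrightarrow> j < n \<Longrightarrow>
  (P * diag_mat_of n g) $$ (i,j) = P $$ (i,j) * (g j :: 'a :: comm_ring_1)"
proof -
  assume P: "P \<in> carrier_mat n n" and i: "i < n" and j: "j < n"
  have "(P * diag_mat_of n g) $$ (i,j) = (\<Sum>l<n. P $$ (i,l) * diag_mat_of n g $$ (l,j))"
    by (rule mat_mult_entry_sum[OF P _ i j]) simp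
  also have "\<dots> = (\<Sum>l<n. if l = j then P $$ (i,j) * g j else 0)"
    by (intro sum.cong refl) (auto simp: diag_mat_of_def j)
  also have "\<dots> = P $$ (i,j) * g j" using j by simp
  finally show ?thesis .
qed

lemma psd_mat:
  fixes X P Q :: "real mat"
  assumes S: "sym_mat n X" and P: "P \<in> carrier_mat n n" and Q: "Q \<in> carrier_mat n n"
    and PQ: "P * Q = 1\<^sub>m n" and XP: "X * P = P * diag_mat_of n g"
    and g: "\<And>j. j < n \<Longrightarrow> g j \<ge> 0" and y: "y \<in> carrier_vec n"
  shows "y \<bullet> (X *\<^sub>v y) \<ge> 0"
proof -
  have X: "X \<in> carrier_mat n n" using S by (simp add: sym_mat_def)
  define c where "c = Q *\<^sub>v y"
  have c: "c \<in> carrier_vec n" unfolding c_def using Q y by simp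
  have yPc: "y = P *\<^sub>v c" unfolding c_def using assoc_mult_mat_vec[OF P Q y] PQ y by simp
  have yk: "y $ k = (\<Sum>i<n. P $$ (k,i) * c $ i)" if "k < n" for k
    using yPc mult_mat_vec_sum[OF P c that] by simp
  have XPe: "(\<Sum>l<n. X $$ (k,l) * P $$ (l,j)) = P $$ (k,j) * g j" if "k < n" "j < n" for k j
    using arg_cong[OF XP, of "\<lambda>M. M $$ (k,j)"] mat_mult_entry_sum[OF X P that] mult_diag_entry[OF P that]
    by simp
  have "y \<bullet> (X *\<^sub>v y) = (\<Sum>k<n. y $ k * (\<Sum>l<n. X $$ (k,l) * y $ l))"
    using X y by (auto simp: scalar_prod_def atLeast0LessThan mult_mat_vec_sum[OF X y] intro!: sum.cong)
  also have "\<dots> = (\<Sum>k<n. (\<Sum>i<n. P $$ (k,i) * c $ i) * (\<Sum>l<n. X $$ (k,l) * (\<Sum>j<n. P $$ (l,j) * c $ j)))"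
    by (auto simp: yk intro!: sum.cong)
  also have "\<dots> \<ge> 0"
    by (rule psd_sum[where g = g]) (use S XPe g in \<open>auto simp: sym_mat_def\<close>)
  finally show ?thesis .
qed

lemma psd_zero:
  fixes X :: "real mat"
  assumes S: "sym_mat n X" and psd: "\<And>y. y \<in> carrier_vec n \<Longrightarrow> y \<bullet> (X *\<^sub>v y) \<ge> 0"
    and x: "x \<in> carrier_vec n" and z: "x \<bullet> (X *\<^sub>v x) \<le> 0"
  shows "X *\<^sub>v x = 0\<^sub>v n"
proof -
  have X: "X \<in> carrier_mat n n" using S by (simp add: sym_mat_def)
  have sym: "\<And>i j. i < n \<Longrightarrow> j < n \<Longrightarrow> X $$ (i,j) = X $$ (j,i)" using S by (simp add: sym_mat_def)
  define q where "q y = (\<Sum>k<n. y k * (\<Sum>l<n. X $$ (k,l) * y l))" for y :: "nat \<Rightarrow> real"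
  have qv: "y \<bullet> (X *\<^sub>v y) = q (\<lambda>i. y $ i)" if "y \<in> carrier_vec n" for y
    using X that by (auto simp: q_def scalar_prod_def atLeast0LessThan mult_mat_vec_sum[OF X that] intro!: sum.cong)
  have qnn: "q f \<ge> 0" for f
  proof -
    have "q f = q (\<lambda>i. vec n f $ i)" unfolding q_def by (intro sum.cong refl) auto
    also have "\<dots> = vec n f \<bullet> (X *\<^sub>v vec n f)" by (rule qv[symmetric]) simp
    also have "\<dots> \<ge> 0" by (rule psd) simp
    finally show ?thesis .
  qed
  define xf where "xf i = x $ i" for i
  define u where "u k = (\<Sum>l<n. X $$ (k,l) * xf l)" for k
  have q0: "q xf = 0" using qnn[of xf] z qv[OF x] unfolding xf_def by simp
  have bilin: "q (\<lambda>i. xf i + t * u i) = q xf + 2 * t * (\<Sum>k<n. u k * u k) + t^2 * q u" for t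
  proof -
    have symsum: "(\<Sum>k<n. u k * (\<Sum>l<n. X $$ (k,l) * xf l)) = (\<Sum>k<n. xf k * (\<Sum>l<n. X $$ (k,l) * u l))"
    proof -
      have "(\<Sum>k<n. u k * (\<Sum>l<n. X $$ (k,l) * xf l)) = (\<Sum>k<n. \<Sum>l<n. xf l * (X $$ (l,k) * u k))"
        by (auto simp: sum_distrib_left sym mult_ac intro!: sum.cong)
      also have "\<dots> = (\<Sum>l<n. \<Sum>k<n. xf l * (X $$ (l,k) * u k))" by (rule sum.swap)
      finally show ?thesis by (simp add: sum_distrib_left)
    qed
    define a where "a k = (\<Sum>l<n. X $$ (k,l) * xf l)" for k
    define b where "b k = (\<Sum>l<n. X $$ (k,l) * u l)" for k
    have inner: "(\<Sum>l<n. X $$ (k,l) * (xf l + t * u l)) = a k + t * b k" for k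
      unfolding a_def b_def distrib_left sum.distrib sum_distrib_left
      by (intro arg_cong2[where f = "(+)"] refl sum.cong) (simp_all add: mult.left_commute)
    have "q (\<lambda>i. xf i + t * u i) = (\<Sum>k<n. (xf k + t * u k) * (a k + t * b k))"
      unfolding q_def inner ..
    also have "\<dots> = (\<Sum>k<n. xf k * a k + t * (u k * a k) + t * (xf k * b k) + t^2 * (u k * b k))"
      by (intro sum.cong refl) (simp add: power2_eq_square distrib_left distrib_right mult.assoc mult.left_commute)
    also have "\<dots> = q xf + t * (\<Sum>k<n. u k * a k) + t * (\<Sum>k<n. xf k * b k) + t^2 * q u"
      unfolding q_def a_def b_def sum.distrib sum_distrib_left[symmetric] ..
    finally have "q (\<lambda>i. xf i + t * u i) = q xf + t * (\<Sum>k<n. u k * (\<Sum>l<n. X $$ (k,l) * xf l))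
       + t * (\<Sum>k<n. xf k * (\<Sum>l<n. X $$ (k,l) * u l)) + t^2 * q u" unfolding a_def b_def .
    also have "\<dots> = q xf + 2 * t * (\<Sum>k<n. u k * u k) + t^2 * q u"
      using symsum unfolding u_def by simp
    finally show ?thesis .
  qed
  define S2 where "S2 = (\<Sum>k<n. u k * u k)"
  have S2nn: "S2 \<ge> 0" unfolding S2_def by (intro sum_nonneg) simp
  have "S2 = 0"
  proof (rule ccontr)
    assume "S2 \<noteq> 0"
    hence S2p: "S2 > 0" using S2nn by simp
    define Qu where "Qu = q u"
    have qu: "Qu \<ge> 0" unfolding Qu_def by (rule qnn)
    define t where "t = - S2 / (Qu + 1)"
    have tneg: "t < 0" unfolding t_def using S2p qu by (simp add: divide_pos_pos)
    have "q (\<lambda>i. xf i + t * u i) = 2 * t * S2 + t^2 * Qu"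
      using bilin[of t] q0 unfolding S2_def Qu_def by simp
    also have "\<dots> = t * (2 * S2 + t * Qu)" by (simp add: power2_eq_square algebra_simps)
    finally have qt: "q (\<lambda>i. xf i + t * u i) = t * (2 * S2 + t * Qu)" .
    have h: "Qu / (Qu + 1) < 1" using qu by simp
    have h2: "S2 * (Qu / (Qu + 1)) < S2 * 1" by (rule mult_strict_left_mono[OF h S2p])
    have h3: "t * Qu = - (S2 * (Qu / (Qu + 1)))" unfolding t_def by simp
    have "2 * S2 + t * Qu > 0" using h2 h3 S2p by linarith
    hence "t * (2 * S2 + t * Qu) < 0" using tneg by (simp add: mult_neg_pos)
    hence "q (\<lambda>i. xf i + t * u i) < 0" using qt by simp
    thus False using qnn[of "\<lambda>i. xf i + t * u i"] by linarith
  qed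
  hence "\<forall>k\<in>{..<n}. u k * u k = 0" unfolding S2_def
    by (subst (asm) sum_nonneg_eq_0_iff) auto
  hence uz: "\<forall>k\<in>{..<n}. u k = 0" by simp
  show ?thesis
  proof (intro eq_vecI)
    fix i assume "i < dim_vec (0\<^sub>v n :: real vec)" hence i: "i < n" by simp
    have "(X *\<^sub>v x) $ i = (\<Sum>l<n. X $$ (i,l) * x $ l)" by (rule mult_mat_vec_sum[OF X x i])
    also have "\<dots> = 0" using uz i unfolding u_def xf_def by simp
    finally show "(X *\<^sub>v x) $ i = 0\<^sub>v n $ i" using i by simp
  next
    show "dim_vec (X *\<^sub>v x) = dim_vec (0\<^sub>v n :: real vec)" using X by simp
  qed
qed


lemma jordan_matrix_diag:
  assumes "\<And>d e. (d,e) \<in> set n_as \<Longrightarrow> d = 1"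
  shows "jordan_matrix n_as = diag_mat_of (length n_as) (\<lambda>i. snd (n_as ! i))"
  using assms
proof (induct n_as)
  case Nil
  show ?case by (rule eq_matI) (auto simp: jordan_matrix_def diag_mat_of_def)
next
  case (Cons de n_as)
  obtain d e where de: "de = (d,e)" by force
  have d1: "d = 1" using Cons(2)[of d e] de by simp
  have IH: "jordan_matrix n_as = diag_mat_of (length n_as) (\<lambda>i. snd (n_as ! i))"
    using Cons by auto
  have sl: "sum_list (map fst n_as) = length n_as"
    using Cons(2) by (induct n_as) (auto, force)
  show ?case unfolding de d1 jordan_matrix_Cons IH sl
  proof (rule eq_matI)
    fix i j assume i: "i < dim_row (diag_mat_of (length ((1, e) # n_as)) (\<lambda>i. snd (((1, e) # n_as) ! i)))"
      and j: "j < dim_col (diag_mat_of (length ((1, e) # n_as)) (\<lambda>i. snd (((1, e) # n_as) ! i)))"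
    hence i': "i < Suc (length n_as)" and j': "j < Suc (length n_as)" by (auto simp: diag_mat_of_def)
    show "four_block_mat (jordan_block 1 e) (0\<^sub>m 1 (length n_as)) (0\<^sub>m (length n_as) 1)
          (diag_mat_of (length n_as) (\<lambda>i. snd (n_as ! i))) $$ (i, j) =
         diag_mat_of (length ((1, e) # n_as)) (\<lambda>i. snd (((1, e) # n_as) ! i)) $$ (i, j)"
    proof -
      have e1: "four_block_mat (jordan_block 1 e) (0\<^sub>m 1 (length n_as)) (0\<^sub>m (length n_as) 1)
          (diag_mat_of (length n_as) (\<lambda>i. snd (n_as ! i))) $$ (i, j) =
          (if i < 1 then if j < 1 then jordan_block 1 e $$ (i,j) else (0\<^sub>m 1 (length n_as)) $$ (i, j - 1)
           else if j < 1 then (0\<^sub>m (length n_as) 1) $$ (i - 1, j)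
           else diag_mat_of (length n_as) (\<lambda>i. snd (n_as ! i)) $$ (i - 1, j - 1))"
        by (subst index_mat_four_block(1)) (use i' j' in \<open>simp_all add: diag_mat_of_def\<close>)
      show ?thesis
      proof (cases "i = 0")
        case True
        then show ?thesis using e1 j' by (cases "j = 0") (simp_all add: diag_mat_of_def)
      next
        case False
        then obtain i1 where i1: "i = Suc i1" by (cases i) auto
        show ?thesis
        proof (cases "j = 0")
          case True
          then show ?thesis using e1 i' i1 by (simp add: diag_mat_of_def)
        next
          case False
          then obtain j1 where j1: "j = Suc j1" by (cases j) auto
          show ?thesis using e1 i' j' i1 j1 by (simp add: diag_mat_of_def)
        qed
      qed
    qed
  qed (simp_all add: diag_mat_of_def)
qed

lemma jnf_order_kernel:
  fixes A :: "real mat"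
  assumes S: "sym_mat n A" and J: "jordan_nf A n_as"
  shows "order e (char_poly A) = kernel_dim (char_matrix A e)"
proof -
  have A: "A \<in> carrier_mat n n" using S by (simp add: sym_mat_def)
  have d1: "\<And>d e. (d,e) \<in> set n_as \<Longrightarrow> d = 1" by (rule sym_jordan_blocks[OF S J])
  have "order e (char_poly A) = sum_list (map fst (filter (\<lambda> na. snd na = e) n_as))"
    by (rule jordan_nf_order[OF J])
  also have "\<dots> = (\<Sum> n \<leftarrow> map fst [(n, e')\<leftarrow>n_as . e' = e]. min 1 n)"
  proof -
    have "\<forall>x\<in>set n_as. fst x = 1" using d1 by auto
    thus ?thesis by (induct n_as) auto
  qed
  also have "\<dots> = dim_gen_eigenspace A e 1" unfolding dim_gen_eigenspace[OF J] ..
  also have "\<dots> = kernel_dim (char_matrix A e)"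
    unfolding dim_gen_eigenspace_def using A by simp
  finally show ?thesis .
qed

lemma sym_jnf_exists:
  fixes A :: "real mat"
  assumes S: "sym_mat n A"
  shows "\<exists>n_as. jordan_nf A n_as"
proof -
  have A: "A \<in> carrier_mat n n" using S by (simp add: sym_mat_def)
  obtain es where "char_poly A = (\<Prod>a\<leftarrow>es. [:-a,1:])" using sym_real_split[OF S] by blast
  from jordan_nf_exists[OF A this] show ?thesis .
qed

lemma sym_diag:
  fixes A :: "real mat"
  assumes S: "sym_mat n A"
  shows "\<exists>P Q g. P \<in> carrier_mat n n \<and> Q \<in> carrier_mat n n \<and> P * Q = 1\<^sub>m n \<and> Q * P = 1\<^sub>m n \<and>
     A * P = P * diag_mat_of n g \<and> (\<forall>i<n. eigenvalue A (g i))"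
proof -
  have A: "A \<in> carrier_mat n n" using S by (simp add: sym_mat_def)
  obtain n_as where J: "jordan_nf A n_as" using sym_jnf_exists[OF S] by blast
  have d1: "\<And>d e. (d,e) \<in> set n_as \<Longrightarrow> d = 1" by (rule sym_jordan_blocks[OF S J])
  define g where "g i = snd (n_as ! i)" for i
  have JM: "jordan_matrix n_as = diag_mat_of (length n_as) g"
    unfolding g_def by (rule jordan_matrix_diag[OF d1])
  from J obtain P Q where wit: "similar_mat_wit A (jordan_matrix n_as) P Q"
    unfolding jordan_nf_def similar_mat_def by blast
  note W = similar_mat_witD2[OF A wit]
  have "diag_mat_of (length n_as) g \<in> carrier_mat n n" using W(5) unfolding JM .
  hence "dim_row (diag_mat_of (length n_as) g) = n" by (rule carrier_matD(1))
  hence len: "length n_as = n" unfolding diag_mat_of_def by (simp only: dim_row_mat(1))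
  have P: "P \<in> carrier_mat n n" and Q: "Q \<in> carrier_mat n n" and PQ: "P * Q = 1\<^sub>m n"
    and QP: "Q * P = 1\<^sub>m n"
    using W unfolding JM len by auto
  have AA: "A = P * diag_mat_of n g * Q" using W(3) unfolding JM len .
  have D: "diag_mat_of n g \<in> carrier_mat n n" by simp
  have "A * P = P * diag_mat_of n g * Q * P" using AA by simp
  also have "\<dots> = P * diag_mat_of n g * (Q * P)"
    by (rule assoc_mult_mat[OF mult_carrier_mat[OF P D] Q P])
  also have "\<dots> = P * diag_mat_of n g" unfolding QP by (rule right_mult_one_mat[OF mult_carrier_mat[OF P D]])
  finally have AP: "A * P = P * diag_mat_of n g" .
  have ev: "eigenvalue A (g i)" if i: "i < n" for i
  proof -
    have mem: "(1, g i) \<in> set n_as" using i len d1 unfolding g_def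
      by (metis nth_mem prod.collapse)
    have "poly (char_poly A) (g i) = 0"
      unfolding jordan_nf_char_poly[OF J] poly_prod_list_zero_iff
      using mem by force
    thus ?thesis using eigenvalue_root_char_poly[OF A] by simp
  qed
  show ?thesis using P Q PQ QP AP ev by blast
qed


definition is_path :: "(nat \<Rightarrow> nat \<Rightarrow> bool) \<Rightarrow> nat set \<Rightarrow> nat list \<Rightarrow> bool" where
  "is_path E V vs \<longleftrightarrow> vs \<noteq> [] \<and> distinct vs \<and> set vs \<subseteq> V \<and>
     (\<forall>k. Suc k < length vs \<longrightarrow> E (vs ! k) (vs ! Suc k))"

lemma finite_paths: "finite V \<Longrightarrow> finite {vs. is_path E V vs}"
proof -
  assume V: "finite V"
  have "{vs. is_path E V vs} \<subseteq> {vs. set vs \<subseteq> V \<and> length vs \<le> card V}"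
    unfolding is_path_def using V by (auto simp: distinct_card[symmetric] intro: card_mono)
  moreover have "finite {vs. set vs \<subseteq> V \<and> length vs \<le> card V}"
    by (rule finite_lists_length_le[OF V])
  ultimately show ?thesis by (rule finite_subset)
qed

lemma exists_leaf:
  assumes V: "finite V" "V \<noteq> {}"
    and irr: "\<And>i. \<not> E i i"
    and nocyc: "\<nexists>vs. is_cycle E vs"
  shows "\<exists>l\<in>V. \<forall>a\<in>V. \<forall>b\<in>V. E l a \<and> E l b \<longrightarrow> a = b"
proof -
  obtain x where x: "x \<in> V" using V by auto
  let ?P = "{vs. is_path E V vs}"
  have fin: "finite ?P" by (rule finite_paths[OF V(1)])
  have ne: "[x] \<in> ?P" using x by (simp add: is_path_def)
  obtain vs where vsP: "vs \<in> ?P" and vsmax: "\<And>us. us \<in> ?P \<Longrightarrow> length us \<le> length vs"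
  proof -
    have "finite (length ` ?P)" using fin by simp
    moreover have "length ` ?P \<noteq> {}" using ne by auto
    ultimately have "Max (length ` ?P) \<in> length ` ?P" by (rule Max_in)
    then obtain vs where "vs \<in> ?P" "length vs = Max (length ` ?P)" by auto
    moreover have "\<And>us. us \<in> ?P \<Longrightarrow> length us \<le> Max (length ` ?P)"
      using fin by (intro Max_ge) auto
    ultimately show ?thesis using that by metis
  qed
  have p: "is_path E V vs" using vsP by simp
  define m where "m = length vs"
  have m1: "m \<ge> 1" using p unfolding is_path_def m_def by (cases vs) auto
  define l where "l = last vs"
  have lnth: "l = vs ! (m - 1)" unfolding l_def m_def using p by (simp add: is_path_def last_conv_nth)
  have lV: "l \<in> V" using p unfolding l_def is_path_def by auto
  have ext: False if c: "c \<in> V" "E l c" "c \<notin> set vs" for c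
  proof -
    have "is_path E V (vs @ [c])" unfolding is_path_def
    proof (intro conjI allI impI)
      show "vs @ [c] \<noteq> []" by simp
      show "distinct (vs @ [c])" using p c(3) by (simp add: is_path_def)
      show "set (vs @ [c]) \<subseteq> V" using p c(1) by (simp add: is_path_def)
      fix k assume k: "Suc k < length (vs @ [c])"
      show "E ((vs @ [c]) ! k) ((vs @ [c]) ! Suc k)"
      proof (cases "Suc k < length vs")
        case True
        then show ?thesis using p by (simp add: nth_append is_path_def)
      next
        case False
        hence sk: "Suc k = length vs" using k by simp
        hence "k = m - 1" unfolding m_def by simp
        hence "(vs @ [c]) ! k = l" using lnth sk unfolding m_def by (simp add: nth_append)
        moreover have "(vs @ [c]) ! Suc k = c" using sk by (simp add: nth_append)
        ultimately show ?thesis using c by simp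
      qed
    qed
    hence "length (vs @ [c]) \<le> length vs" using vsmax[of "vs @ [c]"] by simp
    thus False by simp
  qed
  have cyc: False if c: "c \<in> V" "E l c" "c = vs ! k" "k + 2 < m" for c k
  proof -
    let ?cs = "drop k vs"
    have "is_cycle E ?cs"
      unfolding is_cycle_def
    proof (intro conjI allI impI)
      show "3 \<le> length ?cs" using c unfolding m_def by simp
      show "distinct ?cs" using p unfolding is_path_def by simp
      fix j assume "Suc j < length ?cs"
      thus "E (?cs ! j) (?cs ! Suc j)" using p unfolding is_path_def by auto
    next
      have "last ?cs = l" unfolding l_def using c unfolding m_def by simp
      moreover have "hd ?cs = c" using c unfolding m_def by (simp add: hd_drop_conv_nth)
      ultimately show "E (last ?cs) (hd ?cs)" using c by simp
    qed
    thus False using nocyc by blast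
  qed
  show ?thesis
  proof (intro bexI[OF _ lV] ballI impI)
    fix a b assume a: "a \<in> V" and b: "b \<in> V" and ab: "E l a \<and> E l b"
    show "a = b"
    proof (rule ccontr)
      assume neq: "a \<noteq> b"
      have good: False if c: "c \<in> V" "E l c" "m \<ge> 2 \<longrightarrow> c \<noteq> vs ! (m - 2)" for c
      proof (cases "c \<in> set vs")
        case False
        then show ?thesis using ext c by blast
      next
        case True
        then obtain k where k: "k < m" "c = vs ! k" unfolding m_def by (auto simp: in_set_conv_nth)
        have k1: "k \<noteq> m - 1" using k c irr lnth by auto
        hence m2: "m \<ge> 2" using k by linarith
        hence "k \<noteq> m - 2" using k c by auto
        hence "k + 2 < m" using k k1 m2 by linarith
        thus False using cyc[OF c(1) c(2) k(2)] by blast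
      qed
      show False
      proof (cases "m \<ge> 2 \<and> a = vs ! (m - 2)")
        case True
        hence "b \<noteq> vs ! (m - 2)" using neq by auto
        thus False using good[of b] b ab by blast
      next
        case False
        thus False using good[of a] a ab by blast
      qed
    qed
  qed
qed

lemma acyclic_2col:
  assumes V: "finite V"
    and irr: "\<And>i. \<not> E i i"
    and sym: "\<And>i j. E i j = E j i"
    and nocyc: "\<nexists>vs. is_cycle E vs"
  shows "\<exists>D :: nat \<Rightarrow> bool. \<forall>i\<in>V. \<forall>j\<in>V. E i j \<longrightarrow> D i \<noteq> D j"
  using V
proof (induction "card V" arbitrary: V rule: less_induct)
  case less
  show ?case
  proof (cases "V = {}")
    case True
    then show ?thesis by auto
  next
    case False
    obtain l where lV: "l \<in> V" and leaf: "\<And>a b. a \<in> V \<Longrightarrow> b \<in> V \<Longrightarrow> E l a \<Longrightarrow> E l b \<Longrightarrow> a = b"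
      using exists_leaf[OF less(2) False irr nocyc] by blast
    have cl: "card (V - {l}) < card V" by (rule card_Diff1_less[OF less(2) lV])
    have "\<exists>D :: nat \<Rightarrow> bool. \<forall>i\<in>V - {l}. \<forall>j\<in>V - {l}. E i j \<longrightarrow> D i \<noteq> D j"
      using less(1)[OF cl] less(2) by simp
    then obtain D :: "nat \<Rightarrow> bool" where D: "\<forall>i\<in>V - {l}. \<forall>j\<in>V - {l}. E i j \<longrightarrow> D i \<noteq> D j" by blast
    show ?thesis
    proof (cases "\<exists>u\<in>V. E l u")
      case True
      then obtain u where u: "u \<in> V" "E l u" by blast
      define D' where "D' = D(l := \<not> D u)"
      have ul: "u \<noteq> l" using u irr by auto
      have "\<forall>i\<in>V. \<forall>j\<in>V. E i j \<longrightarrow> D' i \<noteq> D' j"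
      proof (intro ballI impI)
        fix i j assume i: "i \<in> V" and j: "j \<in> V" and ij: "E i j"
        show "D' i \<noteq> D' j"
        proof (cases "i = l")
          case True
          hence "j = u" using leaf[OF j u(1)] ij u by simp
          thus ?thesis using True ul unfolding D'_def by simp
        next
          case il: False
          show ?thesis
          proof (cases "j = l")
            case True
            hence "E l i" using ij sym by simp
            hence "i = u" using leaf[OF i u(1)] u by simp
            thus ?thesis using True ul unfolding D'_def by simp
          next
            case False
            then show ?thesis using il D i j ij unfolding D'_def by auto
          qed
        qed
      qed
      then show ?thesis by blast
    next
      case False
      have "\<forall>i\<in>V. \<forall>j\<in>V. E i j \<longrightarrow> D i \<noteq> D j"
      proof (intro ballI impI)
        fix i j assume i: "i \<in> V" and j: "j \<in> V" and ij: "E i j"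
        have "i \<noteq> l" using False ij j by auto
        moreover have "j \<noteq> l" using False ij i sym by auto
        ultimately show "D i \<noteq> D j" using D i j ij by auto
      qed
      then show ?thesis by blast
    qed
  qed
qed


locale tctx =
  fixes n :: nat and E :: "nat \<Rightarrow> nat \<Rightarrow> bool" and w :: "nat \<Rightarrow> nat \<Rightarrow> real"
  assumes cT: "class_T n E"
    and wsym: "\<forall>i j. E i j \<longrightarrow> w i j = w j i"
    and wpos: "\<forall>i j. E i j \<longrightarrow> w i j > 0"
begin

lemma tree: "is_tree n E" using cT by (simp add: class_T_def)
lemma simple: "simple_graph n E" using tree by (simp add: is_tree_def)
lemma E_lt: "E i j \<Longrightarrow> i < n \<and> j < n" using simple unfolding simple_graph_def by blast
lemma E_sym: "E i j = E j i" using simple by (simp add: simple_graph_def)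
lemma E_irr: "\<not> E i i" using simple by (simp add: simple_graph_def)
lemma conn: "i < n \<Longrightarrow> j < n \<Longrightarrow> E\<^sup>*\<^sup>* i j" using tree by (simp add: is_tree_def graph_connected_def)
lemma nocyc: "\<nexists>vs. is_cycle E vs" using tree by (simp add: is_tree_def)
lemma n_pos: "n \<ge> 1" using tree by (simp add: is_tree_def)
lemma w_pos: "E i j \<Longrightarrow> w i j > 0" using wpos by simp
lemma w_sym: "E i j \<Longrightarrow> w i j = w j i" using wsym by blast

definition nb :: "nat \<Rightarrow> nat set" where "nb i = {j. j < n \<and> E i j}"
abbreviation pend :: "nat \<Rightarrow> bool" where "pend i \<equiv> pendant n E i"
definition par :: "nat \<Rightarrow> nat" where "par i = (THE j. j < n \<and> E i j)"

lemma pend_card: "pend i \<longleftrightarrow> card (nb i) = 1"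
  by (simp add: pendant_def degree_def nb_def)

lemma pend_nb: assumes "pend p" shows "nb p = {par p}"
proof -
  have "card (nb p) = 1" using assms pend_card by simp
  then obtain x where x: "nb p = {x}" by (auto simp: card_1_singleton_iff)
  hence "\<And>j. (j < n \<and> E p j) \<longleftrightarrow> j = x" unfolding nb_def by blast
  hence "par p = x" unfolding par_def by simp
  thus ?thesis using x by simp
qed

lemma pend_par: assumes "pend p" shows "par p < n" "E p (par p)"
  using pend_nb[OF assms] unfolding nb_def by auto

lemma pend_lt: assumes "pend p" shows "p < n"
  using pend_par(2)[OF assms] E_lt by blast

lemma pend_E: assumes "pend p" shows "E p j \<longleftrightarrow> j = par p"
  using pend_nb[OF assms] E_lt unfolding nb_def by blast

lemma par_nonpend: assumes p: "pend p" shows "\<not> pend (par p)"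
proof
  assume q: "pend (par p)"
  let ?q = "par p"
  have "E ?q p" using pend_par(2)[OF p] E_sym by simp
  hence pq: "par ?q = p" using pend_E[OF q] by simp
  obtain i0 where i0: "i0 < n" "\<not> pend i0" using cT unfolding class_T_def by blast
  have "E\<^sup>*\<^sup>* p i0" using conn[OF pend_lt[OF p] i0(1)] .
  hence "i0 \<in> {p, ?q}"
  proof (induct rule: rtranclp_induct)
    case base then show ?case by simp
  next
    case (step y z)
    then show ?case
    proof (cases "y = p")
      case True
      then show ?thesis using step pend_E[OF p] by auto
    next
      case False
      hence "y = ?q" using step by simp
      then show ?thesis using step pend_E[OF q] pq by auto
    qed
  qed
  thus False using i0 p q by auto
qed

lemma nonpend_child: assumes "v < n" "\<not> pend v" shows "\<exists>p. pend p \<and> par p = v"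
proof -
  obtain j where j: "j < n" "E v j" "pend j" using cT assms unfolding class_T_def by blast
  have "E j v" using j(2) E_sym by blast
  hence "par j = v" using pend_E[OF j(3), of v] by simp
  thus ?thesis using j by blast
qed

lemma coloring: "\<exists>D :: nat \<Rightarrow> bool. \<forall>i j. E i j \<longrightarrow> D i \<noteq> D j"
proof -
  obtain D :: "nat \<Rightarrow> bool" where D: "\<forall>i\<in>{..<n}. \<forall>j\<in>{..<n}. E i j \<longrightarrow> D i \<noteq> D j"
    using acyclic_2col[of "{..<n}" E] E_irr E_sym nocyc by blast
  have "\<forall>i j. E i j \<longrightarrow> D i \<noteq> D j"
  proof (intro allI impI)
    fix i j assume ij: "E i j"
    hence "i \<in> {..<n}" "j \<in> {..<n}" using E_lt by auto
    thus "D i \<noteq> D j" using D ij by blast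
  qed
  thus ?thesis by blast
qed

end


context tctx
begin

definition aa :: "nat \<Rightarrow> nat \<Rightarrow> real" where "aa i j = (if E i j then w i j else 0)"
definition PD :: "nat set" where "PD = {b. b < n \<and> pend b}"
definition ch :: "nat \<Rightarrow> nat set" where "ch v = {b. b < n \<and> pend b \<and> par b = v}"
definition ss :: "nat \<Rightarrow> real" where "ss v = (\<Sum>q\<in>ch v. (w q v)^2)"
definition alpha :: "nat \<Rightarrow> real" where "alpha q = w q (par q) / ss (par q)"
definition zeta :: "(nat \<Rightarrow> real) \<Rightarrow> nat \<Rightarrow> real" where "zeta z v = (\<Sum>b\<in>ch v. alpha b * z b)"
definition Cm :: "real mat" where
  "Cm = mat n n (\<lambda>(a,b). if pend a then (if pend b then - alpha a * alpha b * aa (par a) (par b)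
      else (if b = par a then alpha a else 0)) else (if pend b \<and> par b = a then alpha b else 0))"

lemma fin_ch[simp]: "finite (ch v)" unfolding ch_def by simp
lemma fin_PD[simp]: "finite PD" unfolding PD_def by simp

lemma aa_sym: "aa i j = aa j i"
  unfolding aa_def using E_sym w_sym by auto

lemma aa_nonneg: "aa i j \<ge> 0"
  unfolding aa_def using w_pos by (auto simp: less_imp_le)

lemma ch_pend: "pend v \<Longrightarrow> ch v = {}"
  unfolding ch_def using par_nonpend by auto

lemma ch_ne: "v < n \<Longrightarrow> \<not> pend v \<Longrightarrow> ch v \<noteq> {}"
  unfolding ch_def using nonpend_child pend_lt by blast

lemma ss_pos: assumes "v < n" "\<not> pend v" shows "ss v > 0"
proof -
  obtain p where p: "p \<in> ch v" using ch_ne[OF assms] by blast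
  have "E p v" using p pend_par unfolding ch_def by auto
  hence "(w p v)^2 > 0" using w_pos[of p v] by simp
  moreover have "(w p v)^2 \<le> ss v" unfolding ss_def
    by (rule member_le_sum[OF p]) auto
  ultimately show ?thesis by linarith
qed

lemma alpha_pos: assumes "pend p" shows "alpha p > 0"
proof -
  have "ss (par p) > 0" using ss_pos pend_par[OF assms] par_nonpend[OF assms] by blast
  moreover have "w p (par p) > 0" using w_pos pend_par(2)[OF assms] by simp
  ultimately show ?thesis unfolding alpha_def by simp
qed

lemma Cm_carrier: "Cm \<in> carrier_mat n n" unfolding Cm_def by simp

lemma Cm_entry: "a < n \<Longrightarrow> b < n \<Longrightarrow> Cm $$ (a,b) = (if pend a then (if pend b then - alpha a * alpha b * aa (par a) (par b)
      else (if b = par a then alpha a else 0)) else (if pend b \<and> par b = a then alpha b else 0))"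
  unfolding Cm_def by simp

lemma Cm_sym: "a < n \<Longrightarrow> b < n \<Longrightarrow> Cm $$ (a,b) = Cm $$ (b,a)"
  unfolding Cm_entry using aa_sym by auto

lemma sum_split_pend: "(\<Sum>j<n. f j) = (\<Sum>j\<in>{j. j < n \<and> \<not> pend j}. f j) + (\<Sum>j\<in>PD. f j)"
proof -
  have "{..<n} = {j. j < n \<and> \<not> pend j} \<union> PD" unfolding PD_def by auto
  moreover have "{j. j < n \<and> \<not> pend j} \<inter> PD = {}" unfolding PD_def by auto
  ultimately show ?thesis by (simp add: sum.union_disjoint)
qed

lemma group_par: fixes f g :: "nat \<Rightarrow> real" shows "(\<Sum>b\<in>PD. f (par b) * g b) = (\<Sum>v<n. f v * (\<Sum>b\<in>ch v. g b))"
proof -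
  have "(\<Sum>b\<in>PD. f (par b) * g b) = (\<Sum>b\<in>PD. \<Sum>v<n. if par b = v then f v * g b else 0)"
  proof (intro sum.cong refl)
    fix b assume "b \<in> PD"
    hence "par b < n" using pend_par unfolding PD_def by auto
    thus "f (par b) * g b = (\<Sum>v<n. if par b = v then f v * g b else 0)" by simp
  qed
  also have "\<dots> = (\<Sum>v<n. \<Sum>b\<in>PD. if par b = v then f v * g b else 0)" by (rule sum.swap)
  also have "\<dots> = (\<Sum>v<n. f v * (\<Sum>b\<in>ch v. g b))"
  proof (intro sum.cong refl)
    fix v
    have "(\<Sum>b\<in>PD. if par b = v then f v * g b else 0) = (\<Sum>b\<in>PD \<inter> {b. par b = v}. f v * g b)"
      by (simp add: sum.inter_restrict)
    also have "PD \<inter> {b. par b = v} = ch v" unfolding PD_def ch_def by auto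
    also have "(\<Sum>b\<in>ch v. f v * g b) = f v * (\<Sum>b\<in>ch v. g b)"
      by (rule sum_distrib_left[symmetric])
    finally show "(\<Sum>b\<in>PD. if par b = v then f v * g b else 0) = f v * (\<Sum>b\<in>ch v. g b)" .
  qed
  finally show ?thesis .
qed

lemma row_pend: assumes "pend p" shows "(\<Sum>j<n. aa p j * x j) = w p (par p) * x (par p)"
proof -
  have "(\<Sum>j<n. aa p j * x j) = (\<Sum>j<n. if j = par p then w p (par p) * x (par p) else 0)"
    by (intro sum.cong refl) (auto simp: aa_def pend_E[OF assms])
  also have "\<dots> = w p (par p) * x (par p)" using pend_par(1)[OF assms] by simp
  finally show ?thesis .
qed

lemma row_nonpend: assumes u: "u < n" "\<not> pend u"
  shows "(\<Sum>j<n. aa u j * x j) = (\<Sum>j\<in>{j. j < n \<and> \<not> pend j}. aa u j * x j) + (\<Sum>q\<in>ch u. w q u * x q)"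
proof -
  have "(\<Sum>j\<in>PD. aa u j * x j) = (\<Sum>j\<in>PD. if par j = u then w j u * x j else 0)"
  proof (intro sum.cong refl)
    fix j assume j: "j \<in> PD"
    hence pj: "pend j" unfolding PD_def by simp
    have "E u j \<longleftrightarrow> par j = u" using pend_E[OF pj, of u] E_sym by metis
    moreover have "E u j \<Longrightarrow> w u j = w j u" using w_sym by simp
    ultimately show "aa u j * x j = (if par j = u then w j u * x j else 0)" unfolding aa_def by auto
  qed
  also have "\<dots> = (\<Sum>j\<in>PD \<inter> {j. par j = u}. w j u * x j)" by (simp add: sum.inter_restrict)
  also have "PD \<inter> {j. par j = u} = ch u" unfolding PD_def ch_def by auto
  finally show ?thesis using sum_split_pend[of "\<lambda>j. aa u j * x j"] by simp
qed

lemma Cm_row_nonpend: assumes v: "v < n" "\<not> pend v"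
  shows "(\<Sum>b<n. Cm $$ (v,b) * z b) = zeta z v"
proof -
  have "(\<Sum>b<n. Cm $$ (v,b) * z b) = (\<Sum>b<n. if b \<in> ch v then alpha b * z b else 0)"
    by (intro sum.cong refl) (use v in \<open>auto simp: Cm_entry ch_def\<close>)
  also have "\<dots> = zeta z v" unfolding zeta_def
    by (subst sum.inter_restrict[symmetric]) (auto simp: ch_def intro!: sum.cong)
  finally show ?thesis .
qed

lemma Cm_row_pend: assumes p: "pend p"
  shows "(\<Sum>b<n. Cm $$ (p,b) * z b) = alpha p * (z (par p) - (\<Sum>v<n. aa (par p) v * zeta z v))"
proof -
  have pn: "p < n" by (rule pend_lt[OF p])
  have ppn: "par p < n" "\<not> pend (par p)" using pend_par(1)[OF p] par_nonpend[OF p] by auto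
  have "(\<Sum>b<n. Cm $$ (p,b) * z b) = (\<Sum>b\<in>{j. j < n \<and> \<not> pend j}. Cm $$ (p,b) * z b) + (\<Sum>b\<in>PD. Cm $$ (p,b) * z b)"
    by (rule sum_split_pend)
  also have "(\<Sum>b\<in>{j. j < n \<and> \<not> pend j}. Cm $$ (p,b) * z b) = (\<Sum>b\<in>{j. j < n \<and> \<not> pend j}. if b = par p then alpha p * z b else 0)"
    by (intro sum.cong refl) (use pn p in \<open>auto simp: Cm_entry\<close>)
  also have "\<dots> = alpha p * z (par p)"
    by (subst sum.delta) (use ppn in auto)
  also have "(\<Sum>b\<in>PD. Cm $$ (p,b) * z b) = (\<Sum>b\<in>PD. (- alpha p * aa (par p) (par b)) * (alpha b * z b))"
    by (intro sum.cong refl) (use pn p in \<open>auto simp: Cm_entry PD_def\<close>)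
  also have "\<dots> = (\<Sum>v<n. (- alpha p * aa (par p) v) * zeta z v)"
    unfolding zeta_def by (rule group_par[where f = "\<lambda>v. - alpha p * aa (par p) v" and g = "\<lambda>b. alpha b * z b"])
  also have "\<dots> = - alpha p * (\<Sum>v<n. aa (par p) v * zeta z v)"
    by (simp add: sum_distrib_left mult.assoc)
  finally show ?thesis by (simp add: algebra_simps)
qed

lemma zeta_pend: "pend v \<Longrightarrow> zeta z v = 0"
  unfolding zeta_def using ch_pend by simp

end


context tctx
begin

definition AM :: "real mat" where "AM = adj_matrix n E w"

lemma AM_carrier: "AM \<in> carrier_mat n n" unfolding AM_def adj_matrix_def by simp

lemma AM_entry: "i < n \<Longrightarrow> j < n \<Longrightarrow> AM $$ (i,j) = aa i j"
  unfolding AM_def adj_matrix_def aa_def by simp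

lemma AM_sym: "sym_mat n AM"
  unfolding sym_mat_def using AM_carrier AM_entry aa_sym by simp

lemma Cm_symm: "sym_mat n Cm"
  unfolding sym_mat_def using Cm_carrier Cm_sym by simp

lemma AM_row: "x \<in> carrier_vec n \<Longrightarrow> i < n \<Longrightarrow> (AM *\<^sub>v x) $ i = (\<Sum>j<n. aa i j * x $ j)"
  using mult_mat_vec_sum[OF AM_carrier] AM_entry by simp

lemma Cm_row: "x \<in> carrier_vec n \<Longrightarrow> i < n \<Longrightarrow> (Cm *\<^sub>v x) $ i = (\<Sum>b<n. Cm $$ (i,b) * x $ b)"
  using mult_mat_vec_sum[OF Cm_carrier] by simp

lemma zeta_expr: "zeta z v = (\<Sum>b\<in>ch v. w b v * z b) / ss v"
  unfolding zeta_def alpha_def ch_def by (simp add: sum_divide_distrib)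

lemma eig_rows:
  assumes x: "x \<in> carrier_vec n" and eq: "AM *\<^sub>v x = lam \<cdot>\<^sub>v x" and i: "i < n"
  shows "(\<Sum>j<n. aa i j * x $ j) = lam * x $ i"
proof -
  have "(AM *\<^sub>v x) $ i = (lam \<cdot>\<^sub>v x) $ i" using eq by simp
  thus ?thesis using AM_row[OF x i] x i by simp
qed

lemma F1:
  assumes x: "x \<in> carrier_vec n" and eq: "AM *\<^sub>v x = lam \<cdot>\<^sub>v x" and lam: "lam \<noteq> 0"
  shows "Cm *\<^sub>v x = (1 / lam) \<cdot>\<^sub>v x"
proof -
  define xf where "xf j = x $ j" for j
  have rows: "(\<Sum>j<n. aa i j * xf j) = lam * xf i" if "i < n" for i
    using eig_rows[OF x eq that] unfolding xf_def .
  have pq: "xf q = w q (par q) * xf (par q) / lam" if q: "pend q" for q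
  proof -
    have "w q (par q) * xf (par q) = lam * xf q" using rows[OF pend_lt[OF q]] row_pend[OF q] by simp
    thus ?thesis using lam by (simp add: field_simps)
  qed
  have zch: "(\<Sum>b\<in>ch v. w b v * xf b) = ss v * xf v / lam" for v
  proof -
    have "(\<Sum>b\<in>ch v. w b v * xf b) = (\<Sum>b\<in>ch v. (w b v)^2 * (xf v / lam))"
    proof (intro sum.cong refl)
      fix b assume b: "b \<in> ch v"
      hence "pend b" "par b = v" unfolding ch_def by auto
      thus "w b v * xf b = (w b v)^2 * (xf v / lam)" using pq[of b] by (simp add: power2_eq_square)
    qed
    also have "\<dots> = ss v * xf v / lam" unfolding ss_def by (simp add: sum_distrib_right sum_divide_distrib)
    finally show ?thesis .
  qed
  have znp: "zeta xf v = xf v / lam" if v: "v < n" "\<not> pend v" for v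
    unfolding zeta_expr zch using ss_pos[OF v] by simp
  have zall: "zeta xf v = (if pend v then 0 else xf v / lam)" if "v < n" for v
    using znp[OF that] zeta_pend by auto
  show ?thesis
  proof (intro eq_vecI)
    fix i assume "i < dim_vec ((1 / lam) \<cdot>\<^sub>v x)"
    hence i: "i < n" using x by simp
    have lhs: "(Cm *\<^sub>v x) $ i = (\<Sum>b<n. Cm $$ (i,b) * xf b)" using Cm_row[OF x i] unfolding xf_def .
    show "(Cm *\<^sub>v x) $ i = ((1 / lam) \<cdot>\<^sub>v x) $ i"
    proof (cases "pend i")
      case False
      have "(Cm *\<^sub>v x) $ i = xf i / lam" using lhs Cm_row_nonpend[OF i False, of xf] znp[OF i False] by simp
      then show ?thesis using i x by (simp add: xf_def)
    next
      case True
      let ?u = "par i"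
      have u: "?u < n" "\<not> pend ?u" using pend_par[OF True] par_nonpend[OF True] by auto
      have s1: "(\<Sum>v<n. aa ?u v * zeta xf v) = (\<Sum>v\<in>{j. j < n \<and> \<not> pend j}. aa ?u v * xf v) / lam"
      proof -
        have "(\<Sum>v<n. aa ?u v * zeta xf v) = (\<Sum>v\<in>{j. j < n \<and> \<not> pend j}. aa ?u v * zeta xf v) + (\<Sum>v\<in>PD. aa ?u v * zeta xf v)"
          by (rule sum_split_pend)
        also have "(\<Sum>v\<in>PD. aa ?u v * zeta xf v) = 0"
          by (intro sum.neutral) (auto simp: PD_def zeta_pend)
        also have "(\<Sum>v\<in>{j. j < n \<and> \<not> pend j}. aa ?u v * zeta xf v) = (\<Sum>v\<in>{j. j < n \<and> \<not> pend j}. aa ?u v * xf v / lam)"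
          by (intro sum.cong refl) (auto simp: znp)
        finally show ?thesis by (simp add: sum_divide_distrib)
      qed
      have s2: "(\<Sum>v\<in>{j. j < n \<and> \<not> pend j}. aa ?u v * xf v) = lam * xf ?u - ss ?u * xf ?u / lam"
      proof -
        have "(\<Sum>j<n. aa ?u j * xf j) = (\<Sum>j\<in>{j. j < n \<and> \<not> pend j}. aa ?u j * xf j) + (\<Sum>q\<in>ch ?u. w q ?u * xf q)"
          by (rule row_nonpend[OF u])
        thus ?thesis using rows[OF u(1)] zch[of ?u] by simp
      qed
      have ssu: "ss ?u > 0" using ss_pos[OF u] .
      have "(Cm *\<^sub>v x) $ i = alpha i * (xf ?u - (\<Sum>v<n. aa ?u v * zeta xf v))"
        using lhs Cm_row_pend[OF True] by simp
      also have "\<dots> = alpha i * (ss ?u * xf ?u / lam^2)"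
        unfolding s1 s2 using lam by (simp add: field_simps power2_eq_square)
      also have "\<dots> = w i ?u * xf ?u / lam^2"
        unfolding alpha_def using ssu by (simp add: field_simps)
      also have "\<dots> = xf i / lam" using pq[OF True] lam by (simp add: power2_eq_square field_simps)
      finally show ?thesis using i x by (simp add: xf_def)
    qed
  qed (use x Cm_carrier in simp)
qed

lemma F2:
  assumes x: "x \<in> carrier_vec n" and eq: "AM *\<^sub>v x = 0 \<cdot>\<^sub>v x"
  shows "Cm *\<^sub>v x = 0 \<cdot>\<^sub>v x"
proof -
  define xf where "xf j = x $ j" for j
  have rows: "(\<Sum>j<n. aa i j * xf j) = 0" if "i < n" for i
    using eig_rows[OF x eq that] unfolding xf_def by simp
  have pq: "xf (par q) = 0" if q: "pend q" for q
  proof -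
    have "w q (par q) * xf (par q) = 0" using rows[OF pend_lt[OF q]] row_pend[OF q] by simp
    moreover have "w q (par q) > 0" using w_pos pend_par(2)[OF q] by simp
    ultimately show ?thesis by simp
  qed
  have np0: "xf v = 0" if v: "v < n" "\<not> pend v" for v
    using nonpend_child[OF v] pq by blast
  have z0: "zeta xf v = 0" if v: "v < n" for v
  proof (cases "pend v")
    case True thus ?thesis by (rule zeta_pend)
  next
    case False
    have "(\<Sum>j\<in>{j. j < n \<and> \<not> pend j}. aa v j * xf j) = 0"
      by (intro sum.neutral) (auto simp: np0)
    hence "(\<Sum>q\<in>ch v. w q v * xf q) = 0" using row_nonpend[OF v False, of xf] rows[OF v] by simp
    thus ?thesis unfolding zeta_expr by simp
  qed
  show ?thesis
  proof (intro eq_vecI)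
    fix i assume "i < dim_vec (0 \<cdot>\<^sub>v x)"
    hence i: "i < n" using x by simp
    have lhs: "(Cm *\<^sub>v x) $ i = (\<Sum>b<n. Cm $$ (i,b) * xf b)" using Cm_row[OF x i] unfolding xf_def .
    show "(Cm *\<^sub>v x) $ i = (0 \<cdot>\<^sub>v x) $ i"
    proof (cases "pend i")
      case False
      then show ?thesis using lhs Cm_row_nonpend[OF i False] z0[OF i] i x by simp
    next
      case True
      have "(\<Sum>v<n. aa (par i) v * zeta xf v) = 0" by (intro sum.neutral) (auto simp: z0)
      then show ?thesis using lhs Cm_row_pend[OF True] pq[OF True] i x by simp
    qed
  qed (use x Cm_carrier in simp)
qed

end


context tctx
begin

definition Dc :: "nat \<Rightarrow> bool" where "Dc = (SOME D. \<forall>i j. E i j \<longrightarrow> D i \<noteq> D j)"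

lemma Dc: "E i j \<Longrightarrow> Dc i \<noteq> Dc j"
  using someI_ex[OF coloring] unfolding Dc_def by blast

definition dd :: "nat \<Rightarrow> real" where "dd i = (if Dc i then 1 else -1)"

lemma dd_sq: "dd i * dd i = 1" unfolding dd_def by simp
lemma dd_edge: "E i j \<Longrightarrow> dd j = - dd i" using Dc[of i j] unfolding dd_def by auto

definition sg :: "nat \<Rightarrow> real" where "sg i = (if pend i then dd (par i) else dd i)"

lemma sg_sq: "sg i * sg i = 1" unfolding sg_def using dd_sq by simp
lemma sg_abs: "\<bar>sg i\<bar> = 1" unfolding sg_def dd_def by simp

lemma K_nonneg: assumes a: "a < n" and b: "b < n" shows "sg a * sg b * Cm $$ (a,b) \<ge> 0"
proof -
  have ap: "alpha p \<ge> 0" if "pend p" for p using alpha_pos[OF that] by simp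
  show ?thesis
  proof (cases "pend a")
    case pa: True
    show ?thesis
    proof (cases "pend b")
      case pb: True
      show ?thesis
      proof (cases "E (par a) (par b)")
        case True
        hence "sg a * sg b = -1" using pa pb dd_edge[OF True] dd_sq unfolding sg_def by simp
        moreover have "alpha a * alpha b * aa (par a) (par b) \<ge> 0"
          using ap[OF pa] ap[OF pb] aa_nonneg by simp
        ultimately show ?thesis using a b pa pb by (simp add: Cm_entry)
      next
        case False
        thus ?thesis using a b pa pb by (simp add: Cm_entry aa_def)
      qed
    next
      case pb: False
      show ?thesis
      proof (cases "b = par a")
        case True
        thus ?thesis using a b pa pb ap[OF pa] dd_sq by (simp add: Cm_entry sg_def)
      qed (use a b pa pb in \<open>simp add: Cm_entry\<close>)
    qed
  next
    case pa: False
    show ?thesis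
    proof (cases "pend b \<and> par b = a")
      case True
      thus ?thesis using a b pa ap dd_sq by (auto simp: Cm_entry sg_def)
    qed (use a b pa in \<open>auto simp: Cm_entry\<close>)
  qed
qed

lemma K_child: assumes p: "pend p" shows "sg (par p) * sg p * Cm $$ (par p, p) > 0"
  using p alpha_pos[OF p] par_nonpend[OF p] pend_par[OF p] pend_lt[OF p] dd_sq
  by (simp add: Cm_entry sg_def)

lemma K_parent: assumes p: "pend p" shows "sg p * sg (par p) * Cm $$ (p, par p) > 0"
  using p alpha_pos[OF p] par_nonpend[OF p] pend_par[OF p] pend_lt[OF p] dd_sq
  by (simp add: Cm_entry sg_def)

lemma K_pp: assumes p: "pend p" and q: "pend q" and e: "E (par p) (par q)"
  shows "sg p * sg q * Cm $$ (p, q) > 0"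
proof -
  have "sg p * sg q = -1" using p q dd_edge[OF e] dd_sq unfolding sg_def by simp
  moreover have "alpha p * alpha q * aa (par p) (par q) > 0"
    using alpha_pos[OF p] alpha_pos[OF q] w_pos[OF e] e by (simp add: aa_def)
  ultimately show ?thesis using p q pend_lt by (simp add: Cm_entry)
qed

lemma flip_eig:
  assumes ev: "eigenvector AM x mu"
  shows "eigenvector AM (vec n (\<lambda>i. dd i * x $ i)) (- mu)"
proof -
  have x: "x \<in> carrier_vec n" and xn: "x \<noteq> 0\<^sub>v n" and eq: "AM *\<^sub>v x = mu \<cdot>\<^sub>v x"
    using ev AM_carrier unfolding eigenvector_def by auto
  define y where "y = vec n (\<lambda>i. dd i * x $ i)"
  have y: "y \<in> carrier_vec n" unfolding y_def by simp
  have "y \<noteq> 0\<^sub>v n"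
  proof
    assume "y = 0\<^sub>v n"
    have "\<forall>i<n. x $ i = 0"
    proof (intro allI impI)
      fix i assume i: "i < n"
      have "y $ i = dd i * x $ i" unfolding y_def using i by simp
      moreover have "y $ i = 0" using \<open>y = 0\<^sub>v n\<close> i by simp
      moreover have "dd i \<noteq> 0" unfolding dd_def by simp
      ultimately show "x $ i = 0" by simp
    qed
    hence "x = 0\<^sub>v n" using x by (intro eq_vecI) auto
    thus False using xn by simp
  qed
  moreover have "AM *\<^sub>v y = (- mu) \<cdot>\<^sub>v y"
  proof (intro eq_vecI)
    fix i assume "i < dim_vec ((- mu) \<cdot>\<^sub>v y)"
    hence i: "i < n" unfolding y_def by simp
    have "(AM *\<^sub>v y) $ i = (\<Sum>j<n. aa i j * (dd j * x $ j))"
      using AM_row[OF y i] unfolding y_def by simp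
    also have "\<dots> = (\<Sum>j<n. - dd i * (aa i j * x $ j))"
    proof (intro sum.cong refl)
      fix j assume "j \<in> {..<n}"
      show "aa i j * (dd j * x $ j) = - dd i * (aa i j * x $ j)"
        by (cases "E i j") (auto simp: aa_def dd_edge)
    qed
    also have "\<dots> = - dd i * (mu * x $ i)"
    proof -
      have "(\<Sum>j<n. - dd i * (aa i j * x $ j)) = - dd i * (\<Sum>j<n. aa i j * x $ j)"
        by (rule sum_distrib_left[symmetric])
      thus ?thesis using eig_rows[OF x eq i] by simp
    qed
    also have "\<dots> = ((- mu) \<cdot>\<^sub>v y) $ i" using i unfolding y_def by simp
    finally show "(AM *\<^sub>v y) $ i = ((- mu) \<cdot>\<^sub>v y) $ i" .
  qed (use AM_carrier y in simp)
  ultimately show ?thesis unfolding eigenvector_def y_def using AM_carrier by simp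
qed

end


context tctx
begin

definition XX :: "real \<Rightarrow> real mat" where
  "XX rho = mat n n (\<lambda>(i,j). (if i = j then rho else 0) - Cm $$ (i,j))"

lemma XX_carrier: "XX rho \<in> carrier_mat n n" unfolding XX_def by simp

lemma XX_sym: "sym_mat n (XX rho)"
  unfolding sym_mat_def XX_def using Cm_sym by auto

definition Qf :: "real vec \<Rightarrow> real" where
  "Qf y = (\<Sum>a<n. y $ a * (\<Sum>b<n. Cm $$ (a,b) * y $ b))"

lemma XX_row: assumes y: "y \<in> carrier_vec n" and a: "a < n"
  shows "(XX rho *\<^sub>v y) $ a = rho * y $ a - (\<Sum>b<n. Cm $$ (a,b) * y $ b)"
proof -
  have "(XX rho *\<^sub>v y) $ a = (\<Sum>b<n. ((if a = b then rho else 0) - Cm $$ (a,b)) * y $ b)"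
    using mult_mat_vec_sum[OF XX_carrier y a] a by (simp add: XX_def)
  also have "\<dots> = (\<Sum>b<n. (if a = b then rho * y $ b else 0) - Cm $$ (a,b) * y $ b)"
    by (intro sum.cong refl) (simp add: left_diff_distrib)
  also have "\<dots> = (\<Sum>b<n. (if a = b then rho * y $ b else 0)) - (\<Sum>b<n. Cm $$ (a,b) * y $ b)"
    by (rule sum_subtractf)
  also have "(\<Sum>b<n. (if a = b then rho * y $ b else 0)) = rho * y $ a" using a by simp
  finally show ?thesis .
qed

lemma XX_quad: assumes y: "y \<in> carrier_vec n"
  shows "y \<bullet> (XX rho *\<^sub>v y) = rho * (\<Sum>a<n. y $ a * y $ a) - Qf y"
proof -
  have "y \<bullet> (XX rho *\<^sub>v y) = (\<Sum>a<n. y $ a * (XX rho *\<^sub>v y) $ a)"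
    using carrier_matD(1)[OF XX_carrier[of rho]] by (simp only: scalar_prod_def dim_mult_mat_vec atLeast0LessThan)
  also have "\<dots> = (\<Sum>a<n. rho * (y $ a * y $ a) - y $ a * (\<Sum>b<n. Cm $$ (a,b) * y $ b))"
    by (intro sum.cong refl) (simp add: XX_row[OF y] right_diff_distrib)
  also have "\<dots> = rho * (\<Sum>a<n. y $ a * y $ a) - Qf y"
    unfolding Qf_def by (simp add: sum_subtractf sum_distrib_left)
  finally show ?thesis .
qed

lemma Qf_double: "Qf y = (\<Sum>a<n. \<Sum>b<n. Cm $$ (a,b) * (y $ a * y $ b))"
  unfolding Qf_def by (simp add: sum_distrib_left mult_ac)

lemma perron:
  assumes x: "x \<in> carrier_vec n" and xn: "x \<noteq> 0\<^sub>v n" and Cx: "Cm *\<^sub>v x = rho \<cdot>\<^sub>v x"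
    and psd: "\<And>y. y \<in> carrier_vec n \<Longrightarrow> y \<bullet> (XX rho *\<^sub>v y) \<ge> 0"
  shows "\<forall>i<n. x $ i \<noteq> 0"
proof -
  define xp where "xp = vec n (\<lambda>i. sg i * \<bar>x $ i\<bar>)"
  have xp: "xp \<in> carrier_vec n" unfolding xp_def by simp
  have xpi: "xp $ i = sg i * \<bar>x $ i\<bar>" if "i < n" for i unfolding xp_def using that by simp
  have Cxr: "(\<Sum>b<n. Cm $$ (a,b) * x $ b) = rho * x $ a" if a: "a < n" for a
  proof -
    have "(Cm *\<^sub>v x) $ a = (rho \<cdot>\<^sub>v x) $ a" using Cx by simp
    thus ?thesis using Cm_row[OF x a] a x by simp
  qed
  have "Qf x = (\<Sum>a<n. x $ a * (rho * x $ a))" unfolding Qf_def by (intro sum.cong refl) (simp add: Cxr)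
  also have "\<dots> = rho * (\<Sum>a<n. x $ a * x $ a)" by (simp add: sum_distrib_left mult_ac)
  finally have Qx: "Qf x = rho * (\<Sum>a<n. x $ a * x $ a)" .
  have Qle: "Qf x \<le> Qf xp"
    unfolding Qf_double
  proof (intro sum_mono)
    fix a b assume a: "a \<in> {..<n}" and b: "b \<in> {..<n}"
    have K: "sg a * sg b * Cm $$ (a,b) \<ge> 0" using K_nonneg a b by simp
    have "Cm $$ (a,b) * (x $ a * x $ b) \<le> \<bar>Cm $$ (a,b) * (x $ a * x $ b)\<bar>" by simp
    also have "\<dots> = \<bar>sg a * sg b * Cm $$ (a,b)\<bar> * (\<bar>x $ a\<bar> * \<bar>x $ b\<bar>)"
      by (simp add: abs_mult sg_abs)
    also have "\<dots> = Cm $$ (a,b) * (xp $ a * xp $ b)"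
      using K a b by (simp add: xpi mult_ac)
    finally show "Cm $$ (a,b) * (x $ a * x $ b) \<le> Cm $$ (a,b) * (xp $ a * xp $ b)" .
  qed
  have Nq: "(\<Sum>a<n. xp $ a * xp $ a) = (\<Sum>a<n. x $ a * x $ a)"
  proof (intro sum.cong refl)
    fix a assume "a \<in> {..<n}"
    hence "xp $ a * xp $ a = (sg a * sg a) * (\<bar>x $ a\<bar> * \<bar>x $ a\<bar>)" by (simp add: xpi mult_ac)
    thus "xp $ a * xp $ a = x $ a * x $ a" by (simp add: sg_sq)
  qed
  have "xp \<bullet> (XX rho *\<^sub>v xp) \<le> 0"
    unfolding XX_quad[OF xp] Nq using Qx Qle by simp
  hence X0: "XX rho *\<^sub>v xp = 0\<^sub>v n"
  proof (rule psd_zero[OF XX_sym _ xp, rotated])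
    fix y :: "real vec" assume "y \<in> carrier_vec n"
    thus "y \<bullet> (XX rho *\<^sub>v y) \<ge> 0" by (rule psd)
  qed
  have zero_prop: "\<bar>x $ b\<bar> = 0" if a: "a < n" and b: "b < n" and xa: "x $ a = 0"
      and Kp: "sg a * sg b * Cm $$ (a,b) > 0" for a b
  proof -
    have "(XX rho *\<^sub>v xp) $ a = 0" using X0 a by simp
    hence "(\<Sum>c<n. Cm $$ (a,c) * xp $ c) = 0" using XX_row[OF xp a] xpi[OF a] xa by simp
    hence "sg a * (\<Sum>c<n. Cm $$ (a,c) * xp $ c) = 0" by simp
    hence s0: "(\<Sum>c<n. (sg a * sg c * Cm $$ (a,c)) * \<bar>x $ c\<bar>) = 0"
      by (simp add: sum_distrib_left xpi mult_ac)
    have "\<forall>c\<in>{..<n}. (sg a * sg c * Cm $$ (a,c)) * \<bar>x $ c\<bar> = 0"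
      using s0 by (subst (asm) sum_nonneg_eq_0_iff) (auto intro!: mult_nonneg_nonneg K_nonneg[OF a])
    hence "(sg a * sg b * Cm $$ (a,b)) * \<bar>x $ b\<bar> = 0" using b by blast
    moreover have "sg a * sg b * Cm $$ (a,b) \<noteq> 0" by (metis Kp less_irrefl)
    ultimately show ?thesis by (simp only: mult_eq_0_iff) simp
  qed
  have edge: "x $ b = 0" if e: "E a b" and xa: "x $ a = 0" for a b
  proof -
    have ab: "a < n" "b < n" using E_lt[OF e] by auto
    show ?thesis
    proof (cases "pend a")
      case True
      hence "b = par a" using pend_E e by simp
      thus ?thesis using zero_prop[OF ab xa] K_parent[OF True] by simp
    next
      case pa: False
      show ?thesis
      proof (cases "pend b")
        case True
        have "E b a" using e E_sym by simp
        hence "a = par b" using pend_E[OF True] by simp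
        thus ?thesis using zero_prop[OF ab xa] K_child[OF True] by simp
      next
        case pb: False
        obtain p where p: "pend p" "par p = a" using nonpend_child[OF ab(1) pa] by blast
        obtain q where q: "pend q" "par q = b" using nonpend_child[OF ab(2) pb] by blast
        have xp0: "x $ p = 0"
          using zero_prop[OF ab(1) pend_lt[OF p(1)] xa] K_child[OF p(1)] p(2) by simp
        have xq0: "x $ q = 0"
          using zero_prop[OF pend_lt[OF p(1)] pend_lt[OF q(1)] xp0] K_pp[OF p(1) q(1)] p(2) q(2) e by simp
        show ?thesis
          using zero_prop[OF pend_lt[OF q(1)] ab(2) xq0] K_parent[OF q(1)] q(2) by simp
      qed
    qed
  qed
  show ?thesis
  proof (rule ccontr)
    assume "\<not> (\<forall>i<n. x $ i \<noteq> 0)"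
    then obtain k where k: "k < n" "x $ k = 0" by blast
    have "x $ j = 0" if j: "j < n" for j
    proof -
      have "E\<^sup>*\<^sup>* k j" by (rule conn[OF k(1) j])
      thus ?thesis
      proof (induct rule: rtranclp_induct)
        case base then show ?case using k by simp
      next
        case (step y z) then show ?case using edge by blast
      qed
    qed
    hence "x = 0\<^sub>v n" using x by (intro eq_vecI) auto
    thus False using xn by simp
  qed
qed

end


context tctx
begin

lemma col_eig: fixes P M :: "real mat" assumes P: "P \<in> carrier_mat n n" and AP: "M * P = P * diag_mat_of n g"
  and M: "M \<in> carrier_mat n n" and i: "i < n"
  shows "M *\<^sub>v col P i = g i \<cdot>\<^sub>v col P i"
proof (intro eq_vecI)
  fix k assume "k < dim_vec (g i \<cdot>\<^sub>v col P i)"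
  hence k: "k < n" using P by simp
  have "(M *\<^sub>v col P i) $ k = (M * P) $$ (k,i)" using M P k i by simp
  also have "\<dots> = P $$ (k,i) * g i" unfolding AP using mult_diag_entry[OF P k i] .
  also have "\<dots> = (g i \<cdot>\<^sub>v col P i) $ k" using P k i by simp
  finally show "(M *\<^sub>v col P i) $ k = (g i \<cdot>\<^sub>v col P i) $ k" .
qed (use M P in simp)

lemma Cm_col:
  assumes P: "P \<in> carrier_mat n n" and AP: "AM * P = P * diag_mat_of n g" and i: "i < n"
  shows "Cm *\<^sub>v col P i = (1 / g i) \<cdot>\<^sub>v col P i"
proof -
  have e: "AM *\<^sub>v col P i = g i \<cdot>\<^sub>v col P i" by (rule col_eig[OF P AP AM_carrier i])
  have c: "col P i \<in> carrier_vec n" using col_dim[of P i] carrier_matD(1)[OF P] by simp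
  show ?thesis
  proof (cases "g i = 0")
    case True
    thus ?thesis using F2[OF c] e by simp
  next
    case False
    thus ?thesis using F1[OF c e] by simp
  qed
qed

lemma XXP:
  assumes P: "P \<in> carrier_mat n n" and AP: "AM * P = P * diag_mat_of n g"
  shows "XX rho * P = P * diag_mat_of n (\<lambda>i. rho - 1 / g i)"
proof (rule eq_matI)
  fix k i assume k: "k < dim_row (P * diag_mat_of n (\<lambda>i. rho - 1 / g i))"
    and i: "i < dim_col (P * diag_mat_of n (\<lambda>i. rho - 1 / g i))"
  hence k: "k < n" and i: "i < n" using P by (auto simp: diag_mat_of_def)
  have c: "col P i \<in> carrier_vec n" using col_dim[of P i] carrier_matD(1)[OF P] by simp
  have "(XX rho * P) $$ (k,i) = (XX rho *\<^sub>v col P i) $ k" using XX_carrier[of rho] P k i by simp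
  also have "\<dots> = rho * col P i $ k - (\<Sum>b<n. Cm $$ (k,b) * col P i $ b)" by (rule XX_row[OF c k])
  also have "(\<Sum>b<n. Cm $$ (k,b) * col P i $ b) = (Cm *\<^sub>v col P i) $ k" using Cm_row[OF c k] by simp
  also have "\<dots> = (1 / g i) * P $$ (k,i)" unfolding Cm_col[OF P AP i] using P k i by simp
  also have "rho * col P i $ k - (1 / g i) * P $$ (k,i) = P $$ (k,i) * (rho - 1 / g i)"
    using P k i by (simp add: algebra_simps)
  also have "\<dots> = (P * diag_mat_of n (\<lambda>i. rho - 1 / g i)) $$ (k,i)"
    by (rule mult_diag_entry[OF P k i, symmetric])
  finally show "(XX rho * P) $$ (k,i) = (P * diag_mat_of n (\<lambda>i. rho - 1 / g i)) $$ (k,i)" .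
qed (use P XX_carrier in \<open>auto simp: diag_mat_of_def\<close>)

lemma AM_nonzero: "AM \<noteq> 0\<^sub>m n n"
proof
  assume z: "AM = 0\<^sub>m n n"
  obtain i0 where i0: "i0 < n" "\<not> pend i0" using cT unfolding class_T_def by blast
  obtain p where p: "pend p" "par p = i0" using nonpend_child[OF i0] by blast
  have "AM $$ (p, i0) = aa p i0" using AM_entry pend_lt[OF p(1)] i0 by simp
  also have "\<dots> = w p i0" using pend_par(2)[OF p(1)] p(2) by (simp add: aa_def)
  also have "\<dots> > 0" using w_pos pend_par(2)[OF p(1)] p(2) by simp
  finally show False using z i0 pend_lt[OF p(1)] by simp
qed

lemma pos_eig_exists: "\<exists>x. eigenvalue AM x \<and> x > 0"
proof (rule ccontr)
  assume no: "\<not> (\<exists>x. eigenvalue AM x \<and> x > 0)"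
  have nz: "mu = 0" if ev: "eigenvalue AM mu" for mu
  proof -
    have "\<not> mu > 0" using no ev by blast
    moreover have "\<not> mu < 0"
    proof
      assume neg: "mu < 0"
      obtain x where "eigenvector AM x mu" using ev unfolding eigenvalue_def by blast
      hence "eigenvalue AM (- mu)" using flip_eig unfolding eigenvalue_def by blast
      thus False using no neg by auto
    qed
    ultimately show ?thesis by simp
  qed
  obtain P Q g where P: "P \<in> carrier_mat n n" and Q: "Q \<in> carrier_mat n n" and PQ: "P * Q = 1\<^sub>m n"
    and AP: "AM * P = P * diag_mat_of n g" and evs: "\<forall>i<n. eigenvalue AM (g i)"
    using sym_diag[OF AM_sym] by blast
  have "diag_mat_of n g = 0\<^sub>m n n"
    by (rule eq_matI) (use nz evs in \<open>auto simp: diag_mat_of_def\<close>)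
  hence AP0: "AM * P = 0\<^sub>m n n" using AP P by simp
  have "AM = AM * (P * Q)" using PQ AM_carrier by simp
  also have "\<dots> = AM * P * Q" using AM_carrier P Q by (simp add: assoc_mult_mat)
  also have "\<dots> = 0\<^sub>m n n" unfolding AP0 using Q by simp
  finally show False using AM_nonzero by simp
qed

end


context tctx
begin

lemma kernel_le1:
  assumes v: "eigenvector AM v tau"
    and allnz: "\<And>x. eigenvector AM x tau \<Longrightarrow> \<forall>i<n. x $ i \<noteq> 0"
  shows "kernel_dim (char_matrix AM tau) \<le> 1"
proof -
  define M where "M = char_matrix AM tau"
  have Mc: "M \<in> carrier_mat n n" unfolding M_def using AM_carrier by simp
  interpret K: kernel n n M by unfold_locales (rule Mc)
  have vc: "v \<in> carrier_vec n" and vnz: "v \<noteq> 0\<^sub>v n" and Mv: "M *\<^sub>v v = 0\<^sub>v n"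
    using v eigenvector_char_matrix[OF AM_carrier] unfolding M_def by auto
  have vK: "v \<in> mat_kernel M" by (rule mat_kernelI[OF Mc vc Mv])
  have n0: "0 < n" using n_pos by simp
  have v0: "v $ 0 \<noteq> 0" using allnz[OF v] n0 by blast
  have Av: "AM *\<^sub>v v = tau \<cdot>\<^sub>v v" using v unfolding eigenvector_def by simp
  have sub: "mat_kernel M \<subseteq> K.span {v}"
  proof
    fix u assume uK: "u \<in> mat_kernel M"
    have uc: "u \<in> carrier_vec n" and Mu: "M *\<^sub>v u = 0\<^sub>v n" using mat_kernelD[OF Mc uK] by auto
    define c where "c = u $ 0 / v $ 0"
    have ucv: "u = c \<cdot>\<^sub>v v"
    proof (cases "u = 0\<^sub>v n")
      case True
      have "c = 0" unfolding c_def using True n0 by simp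
      thus ?thesis using True vc by (intro eq_vecI) auto
    next
      case False
      have "eigenvector AM u tau"
        using eigenvector_char_matrix[OF AM_carrier] uc False Mu unfolding M_def by auto
      hence Au: "AM *\<^sub>v u = tau \<cdot>\<^sub>v u" unfolding eigenvector_def by simp
      define z where "z = vec n (\<lambda>i. u $ i - c * v $ i)"
      have zc: "z \<in> carrier_vec n" unfolding z_def by simp
      have Az: "AM *\<^sub>v z = tau \<cdot>\<^sub>v z"
      proof (intro eq_vecI)
        fix i assume "i < dim_vec (tau \<cdot>\<^sub>v z)"
        hence i: "i < n" unfolding z_def by simp
        have "(AM *\<^sub>v z) $ i = (\<Sum>j<n. aa i j * (u $ j - c * v $ j))"
          using AM_row[OF zc i] unfolding z_def by simp
        also have "\<dots> = (\<Sum>j<n. aa i j * u $ j) - c * (\<Sum>j<n. aa i j * v $ j)"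
          by (simp add: right_diff_distrib sum_subtractf sum_distrib_left mult_ac)
        also have "\<dots> = tau * u $ i - c * (tau * v $ i)"
          using eig_rows[OF uc Au i] eig_rows[OF vc Av i] by simp
        also have "\<dots> = (tau \<cdot>\<^sub>v z) $ i" using i unfolding z_def by (simp add: algebra_simps)
        finally show "(AM *\<^sub>v z) $ i = (tau \<cdot>\<^sub>v z) $ i" .
      qed (use AM_carrier zc in simp)
      have z0: "z $ 0 = 0" unfolding z_def c_def using n0 v0 by simp
      have "z = 0\<^sub>v n"
      proof (rule ccontr)
        assume "z \<noteq> 0\<^sub>v n"
        hence "eigenvector AM z tau" unfolding eigenvector_def using zc Az AM_carrier by simp
        thus False using allnz z0 n0 by blast
      qed
      hence "\<forall>i<n. u $ i = c * v $ i" unfolding z_def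
        by (metis (no_types, lifting) eq_iff_diff_eq_0 index_vec index_zero_vec(1))
      thus ?thesis using uc vc by (intro eq_vecI) auto
    qed
    have "v \<in> K.span {v}" using K.Ker.in_own_span[of "{v}"] vK by auto
    moreover have "submodule class_ring (K.span {v}) K.VK"
      by (rule K.Ker.span_is_submodule) (use vK in simp)
    ultimately have "c \<cdot>\<^sub>v v \<in> K.span {v}"
      using submodule.smult_closed[of class_ring "K.span {v}" K.VK c v] by simp
    thus "u \<in> K.span {v}" using ucv by simp
  qed
  have "K.span {v} \<subseteq> mat_kernel M"
    using K.Ker.span_is_subset2[of "{v}"] vK by simp
  hence "K.gen_set {v}" using sub by simp
  hence "K.dim \<le> 1" using K.Ker.dim_le1I vK by simp
  thus ?thesis unfolding M_def[symmetric] by simp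
qed

lemma main_tctx:
  "let A = adj_matrix n E w; \<tau> = Min {x. eigenvalue A x \<and> x > 0} in
    (\<exists>x. eigenvalue A x \<and> x > 0) \<and>
    order \<tau> (char_poly A) = 1 \<and>
    (\<exists>v. eigenvector A v \<tau> \<and> (\<forall>i<n. v $ i \<noteq> 0))"
proof -
  define S where "S = {x. eigenvalue AM x \<and> x > 0}"
  define tau where "tau = Min S"
  have cpnz: "char_poly AM \<noteq> 0" using degree_monic_char_poly[OF AM_carrier] by auto
  have "S \<subseteq> {x. poly (char_poly AM) x = 0}"
    unfolding S_def using eigenvalue_root_char_poly[OF AM_carrier] by auto
  hence finS: "finite S" using poly_roots_finite[OF cpnz] by (rule finite_subset)
  have neS: "S \<noteq> {}" using pos_eig_exists unfolding S_def by auto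
  have tauS: "tau \<in> S" unfolding tau_def using finS neS by (rule Min_in)
  have taumin: "\<And>mu. mu \<in> S \<Longrightarrow> tau \<le> mu" unfolding tau_def using finS by simp
  have taupos: "tau > 0" and evtau: "eigenvalue AM tau" using tauS unfolding S_def by auto
  obtain P Q g where P: "P \<in> carrier_mat n n" and Q: "Q \<in> carrier_mat n n" and PQ: "P * Q = 1\<^sub>m n"
    and AP: "AM * P = P * diag_mat_of n g" and evs: "\<forall>i<n. eigenvalue AM (g i)"
    using sym_diag[OF AM_sym] by blast
  define rho where "rho = 1 / tau"
  have XP: "XX rho * P = P * diag_mat_of n (\<lambda>i. rho - 1 / g i)" by (rule XXP[OF P AP])
  have hnn: "rho - 1 / g j \<ge> 0" if j: "j < n" for j
  proof (cases "g j > 0")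
    case True
    hence "g j \<in> S" unfolding S_def using evs j by simp
    hence "tau \<le> g j" by (rule taumin)
    hence "1 / g j \<le> 1 / tau" using taupos by (simp add: frac_le)
    thus ?thesis unfolding rho_def by simp
  next
    case False
    hence "1 / g j \<le> 0" by (intro divide_nonneg_nonpos) simp_all
    moreover have "rho > 0" unfolding rho_def using taupos by simp
    ultimately show ?thesis by linarith
  qed
  have psd: "y \<bullet> (XX rho *\<^sub>v y) \<ge> 0" if "y \<in> carrier_vec n" for y
    by (rule psd_mat[OF XX_sym P Q PQ XP hnn that])
  have allnz: "\<forall>i<n. x $ i \<noteq> 0" if ev: "eigenvector AM x tau" for x
  proof -
    have x: "x \<in> carrier_vec n" and xn: "x \<noteq> 0\<^sub>v n" and eq: "AM *\<^sub>v x = tau \<cdot>\<^sub>v x"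
      using ev AM_carrier unfolding eigenvector_def by auto
    have "Cm *\<^sub>v x = rho \<cdot>\<^sub>v x" using F1[OF x eq] taupos unfolding rho_def by simp
    thus ?thesis using perron[OF x xn _ psd] by blast
  qed
  obtain v where v: "eigenvector AM v tau" using evtau unfolding eigenvalue_def by blast
  obtain n_as where J: "jordan_nf AM n_as" using sym_jnf_exists[OF AM_sym] by blast
  have ord: "order tau (char_poly AM) = kernel_dim (char_matrix AM tau)"
    by (rule jnf_order_kernel[OF AM_sym J])
  have "poly (char_poly AM) tau = 0" using evtau eigenvalue_root_char_poly[OF AM_carrier] by simp
  hence o1: "order tau (char_poly AM) \<noteq> 0" using cpnz order_root by blast
  have o2: "order tau (char_poly AM) \<le> 1" unfolding ord by (rule kernel_le1[OF v allnz])
  have "order tau (char_poly AM) = 1" using o1 o2 by simp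
  moreover have "\<exists>x. eigenvalue AM x \<and> x > 0" by (rule pos_eig_exists)
  moreover have "\<exists>v. eigenvector AM v tau \<and> (\<forall>i<n. v $ i \<noteq> 0)" using v allnz by blast
  ultimately show ?thesis unfolding Let_def AM_def[symmetric] tau_def S_def by blast
qed

end

theorem corollary3p11:
  fixes n :: nat and E :: "nat \<Rightarrow> nat \<Rightarrow> bool" and w :: "nat \<Rightarrow> nat \<Rightarrow> real"
  assumes "class_T n E"
    and "\<forall>i j. E i j \<longrightarrow> w i j = w j i"
    and "\<forall>i j. E i j \<longrightarrow> w i j > 0"
  shows "let A = adj_matrix n E w; \<tau> = Min {x. eigenvalue A x \<and> x > 0} in
    (\<exists>x. eigenvalue A x \<and> x > 0) \<and>
    order \<tau> (char_poly A) = 1 \<and>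
    (\<exists>v. eigenvector A v \<tau> \<and> (\<forall>i<n. v $ i \<noteq> 0))"
proof -
  interpret tctx n E w using assms by unfold_locales
  show ?thesis by (rule main_tctx)
qed


end
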